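(* Let $\mathbf H\subset GL_m(\mathbb C)$ be a finite unitary group with generating set $X_{\mathbf H}$ and $\mathbf G=\mathbf H\wr\mathrm{Sym}_n$, with the subgroup sequence, coset leaders, initial vector and generating sets $X_k$ of $\mathbf G_k$ described in the context. Assume the Nearest Neighbors Property holds for $X_{2n-1}$. Let $g\in\mathbf G$. If a received vector lies in the decoding region containing a nearest neighbor of $g^{-1}\mathbf x_0$, then the subgroup decoding algorithm decodes it to a group element whose canonical form as a product of coset leaders differs from that of $g$ in only one factor.
   Context: $\mathbf G$ is the group of $mn\times mn$ block permutation matrices with nonzero blocks in $\mathbf H$. Subgroups: $\mathbf G_0=\{I\}$, $\mathbf G_{2l-1}=(\mathbf H\wr\mathrm{Sym}_l)\oplus\{I_{m(n-l)}\}$ ($1\le l\le n$), $\mathbf G_{2l}=(\mathbf H\wr\mathrm{Sym}_l)\oplus\mathbf H\oplus\{I_{m(n-l-1)}\}$ ($1\le l\le n-1$). Coset leaders: $\operatorname{CL}(\mathbf G_1/\mathbf G_0)=\mathbf G_1$; $\operatorname{CL}(\mathbf G_{2l}/\mathbf G_{2l-1})=\{(1,\dots,1,h,1,\dots,1):h\in\mathbf H\text{ in slot }l+1\}$; $\operatorname{CL}(\mathbf G_{2l+1}/\mathbf G_{2l})=\{(j\ j{+}1\ \cdots\ l{+}1):1\le j\le l+1\}$; every $g$ is uniquely $c_{2n-1}\cdots c_1$ with $c_k\in\operatorname{CL}(\mathbf G_k/\mathbf G_{k-1})$ (canonical form). Initial vector $\mathbf x_0=(u_1\mathbf v_0,\dots,u_n\mathbf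 v_0)$, $\mathbf v_0\in\mathbb C^m$ a unit vector such that the identity is the unique $h\in\mathbf H$ minimizing $\|h\mathbf v_0-\mathbf v_0\|$, reals $0<u_1<\cdots<u_n$, $\|\mathbf x_0\|=1$. Generators: $X_{2l-1}=\{(h,1,\dots,1):h\in X_{\mathbf H}\}\cup\{(1\,2),\dots,(l{-}1\ l)\}$, $X_{2l}=X_{2l-1}\cup\{(1,\dots,1,h,1,\dots,1):h\in\mathbf H\text{ in slot }l+1\}$. $S=\operatorname{Stab}_{\mathbf G}(\mathbf x_0)$; $d_{min}=\min_{a\notin S}\|a\mathbf x_0-\mathbf x_0\|$; nearest neighbors of a codeword $\mathbf u\in\mathbf G\mathbf x_0$ are codewords $\mathbf v$ with $\|\mathbf u-\mathbf v\|=d_{min}$; $N_{\mathbf G}=\{a\in\mathbf G:a\mathbf x_0\text{ is a nearest neighbor of }\mathbf x_0\}$; Nearest Neighbors Property for $X$: $N_{\mathbf G}\subseteq X\cup X^{-1}$. Decoding region $\operatorname{DR}(h)=\{\mathbf x:\|h\mathbf x-\mathbf x_0\|<\|a\mathbf x-\mathbf x_0\|\ \forall a\notin Sh\}$, which contains $h^{-1}\mathbf x_0$. Subgroup decoding algorithm: $\mathbf r_0=\mathbf r$; for $k=1,\dots,2n-1$ choose $d_k\in\operatorname{CL}(\mathbf G_k/\mathbf G_{k-1})$ minimizing $\|a\mathbf r_{k-1}-\mathbf x_0\|$ (ties broken by a fixed ordering), $\mathbf r_k=d_k\mathbf r_{k-1}$; output $d_{2n-1}\cdots d_1$. *)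

theory Defs
  imports "HOL-Combinatorics.Permutations" "Jordan_Normal_Form.Matrix"
begin

definition vnorm :: "complex vec \<Rightarrow> real" where
  "vnorm x = sqrt (\<Sum>i<dim_vec x. (cmod (x $ i))^2)"

definition cadj :: "complex mat \<Rightarrow> complex mat" where
  "cadj A = mat (dim_col A) (dim_row A) (\<lambda>(i,j). cnj (A $$ (j,i)))"

definition unitary_mat :: "nat \<Rightarrow> complex mat \<Rightarrow> bool" where
  "unitary_mat m A \<longleftrightarrow> A \<in> carrier_mat m m \<and> A * cadj A = 1\<^sub>m m \<and> cadj A * A = 1\<^sub>m m"

definition finite_unitary_group :: "nat \<Rightarrow> complex mat set \<Rightarrow> bool" where
  "finite_unitary_group m H \<longleftrightarrow> finite H \<and> (\<forall>h\<in>H. unitary_mat m h) \<and> 1\<^sub>m m \<in> H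
     \<and> (\<forall>a\<in>H. \<forall>b\<in>H. a * b \<in> H) \<and> (\<forall>a\<in>H. \<exists>b\<in>H. a * b = 1\<^sub>m m)"

inductive_set gen_grp :: "nat \<Rightarrow> complex mat set \<Rightarrow> complex mat set" for m X where
  one: "1\<^sub>m m \<in> gen_grp m X"
| gen: "x \<in> X \<Longrightarrow> y \<in> gen_grp m X \<Longrightarrow> x * y \<in> gen_grp m X"
| inv: "x \<in> X \<Longrightarrow> z \<in> carrier_mat m m \<Longrightarrow> x * z = 1\<^sub>m m \<Longrightarrow> y \<in> gen_grp m X
          \<Longrightarrow> z * y \<in> gen_grp m X"

definition generates :: "nat \<Rightarrow> complex mat set \<Rightarrow> complex mat set \<Rightarrow> bool" where
  "generates m X H \<longleftrightarrow> X \<subseteq> H \<and> gen_grp m X = H"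

text \<open>Blocks are indexed 0..n-1 (block i of the paper is block i-1 here).
  The block monomial matrix with diagonal part hs and permutation s has block hs i
  in block position (i, inv s i), i.e. block (s j, j) equals hs (s j); all other blocks vanish.
  Thus wr hs id is the block diagonal (hs 0, ..., hs (n-1)) and wr (\<lambda>_. 1) s is the
  block permutation matrix sending block j to block s j.\<close>
definition wr :: "nat \<Rightarrow> nat \<Rightarrow> (nat \<Rightarrow> complex mat) \<Rightarrow> (nat \<Rightarrow> nat) \<Rightarrow> complex mat" where
  "wr m n hs s = mat (m*n) (m*n)
     (\<lambda>(r,c). if r div m = s (c div m) then hs (r div m) $$ (r mod m, c mod m) else 0)"

definition wr_sub :: "nat \<Rightarrow> nat \<Rightarrow> complex mat set \<Rightarrow> nat \<Rightarrow> nat \<Rightarrow> complex mat set" where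
  "wr_sub m n H p q = {wr m n hs s | hs s. s permutes {..<p} \<and> (\<forall>i<q. hs i \<in> H)
                         \<and> (\<forall>i. q \<le> i \<longrightarrow> hs i = 1\<^sub>m m)}"

definition GG :: "nat \<Rightarrow> nat \<Rightarrow> complex mat set \<Rightarrow> complex mat set" where
  "GG m n H = wr_sub m n H n n"

text \<open>Subgroup chain G_0 < G_1 < ... < G_{2n-1} = G.
  G_{2l-1} = (H wr Sym_l) + I,  G_{2l} = (H wr Sym_l) + H + I.\<close>
definition Gk :: "nat \<Rightarrow> nat \<Rightarrow> complex mat set \<Rightarrow> nat \<Rightarrow> complex mat set" where
  "Gk m n H k = (if k = 0 then {1\<^sub>m (m*n)}
                 else if odd k then wr_sub m n H ((k+1) div 2) ((k+1) div 2)
                 else wr_sub m n H (k div 2) (k div 2 + 1))"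

definition cyc :: "nat \<Rightarrow> nat \<Rightarrow> nat \<Rightarrow> nat" where
  "cyc a b i = (if a \<le> i \<and> i < b then i + 1 else if i = b then a else i)"

definition adjswap :: "nat \<Rightarrow> nat \<Rightarrow> nat" where
  "adjswap i k = (if k = i then i + 1 else if k = i + 1 then i else k)"

text \<open>Coset leaders CL(G_k / G_{k-1}), k = 1..2n-1.
  CL_1 = G_1; CL_{2l} = {(1,..,1,h,1,..,1) : h in H, h in slot l+1};
  CL_{2l+1} = {(j j+1 ... l+1) : 1 <= j <= l+1}  (1-indexed; here 0-indexed).\<close>
definition CL :: "nat \<Rightarrow> nat \<Rightarrow> complex mat set \<Rightarrow> nat \<Rightarrow> complex mat set" where
  "CL m n H k = (if k = 1 then Gk m n H 1
                 else if even k then {wr m n (\<lambda>i. if i = k div 2 then h else 1\<^sub>m m) id | h. h \<in> H}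
                 else {wr m n (\<lambda>_. 1\<^sub>m m) (cyc j (k div 2)) | j. j \<le> k div 2})"

definition Xodd :: "nat \<Rightarrow> nat \<Rightarrow> complex mat set \<Rightarrow> nat \<Rightarrow> complex mat set" where
  "Xodd m n XH l = {wr m n (\<lambda>i. if i = 0 then h else 1\<^sub>m m) id | h. h \<in> XH}
                 \<union> {wr m n (\<lambda>_. 1\<^sub>m m) (adjswap i) | i. i + 1 < l}"

definition Xk :: "nat \<Rightarrow> nat \<Rightarrow> complex mat set \<Rightarrow> complex mat set \<Rightarrow> nat \<Rightarrow> complex mat set" where
  "Xk m n H XH k = (if odd k then Xodd m n XH ((k+1) div 2)
                    else Xodd m n XH (k div 2)
                         \<union> {wr m n (\<lambda>i. if i = k div 2 then h else 1\<^sub>m m) id | h. h \<in> H})"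

definition Stab :: "complex mat set \<Rightarrow> complex vec \<Rightarrow> complex mat set" where
  "Stab G x0 = {a \<in> G. a *\<^sub>v x0 = x0}"

definition dmin :: "complex mat set \<Rightarrow> complex vec \<Rightarrow> real" where
  "dmin G x0 = Min {vnorm (a *\<^sub>v x0 - x0) | a. a \<in> G - Stab G x0}"

text \<open>v is a nearest neighbour of the codeword u (only meaningful when G x0 has more than one
  point, i.e. G - Stab is nonempty, which is where d_min is defined).\<close>
definition nearest_neighbor :: "complex mat set \<Rightarrow> complex vec \<Rightarrow> complex vec \<Rightarrow> complex vec \<Rightarrow> bool" where
  "nearest_neighbor G x0 u v \<longleftrightarrow> G - Stab G x0 \<noteq> {} \<and> u \<in> (\<lambda>a. a *\<^sub>v x0) ` G
      \<and> v \<in> (\<lambda>a. a *\<^sub>v x0) ` G \<and> vnorm (u - v) = dmin G x0"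

definition NG :: "complex mat set \<Rightarrow> complex vec \<Rightarrow> complex mat set" where
  "NG G x0 = {a \<in> G. nearest_neighbor G x0 x0 (a *\<^sub>v x0)}"

definition inv_set :: "nat \<Rightarrow> complex mat set \<Rightarrow> complex mat set \<Rightarrow> complex mat set" where
  "inv_set N G X = {a \<in> G. \<exists>x\<in>X. a * x = 1\<^sub>m N}"

definition NN_property :: "nat \<Rightarrow> complex mat set \<Rightarrow> complex vec \<Rightarrow> complex mat set \<Rightarrow> bool" where
  "NN_property N G x0 X \<longleftrightarrow> NG G x0 \<subseteq> X \<union> inv_set N G X"

definition DR :: "nat \<Rightarrow> complex mat set \<Rightarrow> complex vec \<Rightarrow> complex mat \<Rightarrow> complex vec set" where
  "DR N G x0 h = {x \<in> carrier_vec N. \<forall>a \<in> G - {s * h | s. s \<in> Stab G x0}.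
                    vnorm (h *\<^sub>v x - x0) < vnorm (a *\<^sub>v x - x0)}"

fun lprod :: "nat \<Rightarrow> (nat \<Rightarrow> complex mat) \<Rightarrow> nat \<Rightarrow> complex mat" where
  "lprod N c 0 = 1\<^sub>m N"
| "lprod N c (Suc k) = c (Suc k) * lprod N c k"

text \<open>d is a run of the subgroup decoding algorithm on the received vector r:
  r_0 = r, d_k in CL_k minimises |a r_{k-1} - x0| over a in CL_k, r_k = d_k r_{k-1}.
  Any choice among minimisers is allowed (this covers every fixed tie-breaking order).
  The output is lprod (m*n) d (2n-1).\<close>
definition decoding_run :: "nat \<Rightarrow> nat \<Rightarrow> complex mat set \<Rightarrow> complex vec \<Rightarrow> complex vec
                              \<Rightarrow> (nat \<Rightarrow> complex mat) \<Rightarrow> bool" where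
  "decoding_run m n H x0 r d \<longleftrightarrow>
     (\<forall>k \<in> {1..2*n-1}. d k \<in> CL m n H k \<and>
        (\<forall>a \<in> CL m n H k. vnorm (d k *\<^sub>v (lprod (m*n) d (k-1) *\<^sub>v r) - x0)
                            \<le> vnorm (a *\<^sub>v (lprod (m*n) d (k-1) *\<^sub>v r) - x0)))"

definition init_vec :: "nat \<Rightarrow> nat \<Rightarrow> (nat \<Rightarrow> real) \<Rightarrow> complex vec \<Rightarrow> complex vec" where
  "init_vec m n u v0 = vec (m*n) (\<lambda>r. complex_of_real (u (r div m)) * v0 $ (r mod m))"

end

theory Submission
  imports Defs "Jordan_Normal_Form.Determinant"
begin


lemma sum_blocks: "(\<Sum>k<(m::nat)*n. f k) = (\<Sum>q<n. \<Sum>t<m. f (q*m+t))"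
proof -
  have "(\<Sum>k<m*n. f k) = (\<Sum>q<n. sum f {q*m..<q*m+m})"
    using sum.nat_group[where g=f and k=m and n=n] by (simp add: mult.commute)
  also have "\<dots> = (\<Sum>q<n. \<Sum>t<m. f (q*m+t))"
  proof (rule sum.cong[OF refl])
    fix q
    have "\<And>a. sum f {a..<a+k} = (\<Sum>t<k. f (a+t))" for k by (induct k) auto
    then show "sum f {q*m..<q*m+m} = (\<Sum>t<m. f (q*m+t))" by blast
  qed
  finally show ?thesis .
qed

abbreviation pinv :: "(nat \<Rightarrow> nat) \<Rightarrow> nat \<Rightarrow> nat" where "pinv s \<equiv> Hilbert_Choice.inv s"

lemma divmod_blk: "t < (m::nat) \<Longrightarrow> (q*m+t) div m = q \<and> (q*m+t) mod m = t"
  by auto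

lemma wr_index: "r < m*n \<Longrightarrow> c < m*n \<Longrightarrow> wr m n hs s $$ (r,c) =
   (if r div m = s (c div m) then hs (r div m) $$ (r mod m, c mod m) else 0)"
  unfolding wr_def by simp

lemma wr_carrier[simp]: "wr m n hs s \<in> carrier_mat (m*n) (m*n)"
  unfolding wr_def by simp

lemma wr_dims[simp]: "dim_row (wr m n hs s) = m*n" "dim_col (wr m n hs s) = m*n"
  unfolding wr_def by simp_all

lemma wr_mult:
  assumes s1: "s1 permutes {..<n}" and s2: "s2 permutes {..<n}"
    and h1: "\<And>i. hs1 i \<in> carrier_mat m m" and h2: "\<And>i. hs2 i \<in> carrier_mat m m"
  shows "wr m n hs1 s1 * wr m n hs2 s2 = wr m n (\<lambda>i. hs1 i * hs2 (pinv s1 i)) (s1 \<circ> s2)"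
proof (rule eq_matI)
  fix r c assume r: "r < dim_row (wr m n (\<lambda>i. hs1 i * hs2 (pinv s1 i)) (s1 \<circ> s2))"
    and c: "c < dim_col (wr m n (\<lambda>i. hs1 i * hs2 (pinv s1 i)) (s1 \<circ> s2))"
  hence r: "r < m*n" and c: "c < m*n" by auto
  hence m: "m > 0" by (cases m) auto
  have rd: "r div m < n" using r by (simp add: less_mult_imp_div_less mult.commute)
  have cd: "c div m < n" using c by (simp add: less_mult_imp_div_less mult.commute)
  define q0 where "q0 = pinv s1 (r div m)"
  have q0: "q0 < n" using permutes_in_image[OF permutes_inv[OF s1]] rd unfolding q0_def by auto
  have eq: "\<And>q. (r div m = s1 q) = (q = q0)"
    unfolding q0_def using permutes_inv_eq[OF s1] by metis
  have "(wr m n hs1 s1 * wr m n hs2 s2) $$ (r,c) =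
      (\<Sum>k<m*n. wr m n hs1 s1 $$ (r,k) * wr m n hs2 s2 $$ (k,c))"
    using r c by (simp add: scalar_prod_def row_def col_def lessThan_atLeast0)
  also have "\<dots> = (\<Sum>q<n. \<Sum>t<m. wr m n hs1 s1 $$ (r,q*m+t) * wr m n hs2 s2 $$ (q*m+t,c))"
    by (rule sum_blocks)
  also have "\<dots> = (\<Sum>q<n. if q = q0 then (\<Sum>t<m. hs1 (r div m) $$ (r mod m, t) *
        (if q = s2 (c div m) then hs2 q $$ (t, c mod m) else 0)) else 0)"
  proof (rule sum.cong[OF refl])
    fix q assume q: "q \<in> {..<n}"
    have qm: "\<And>t. t < m \<Longrightarrow> q*m+t < m*n"
    proof -
      fix t assume "t < m"
      hence "q*m+t < q*m+m" by simp
      also have "\<dots> = (q+1)*m" by simp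
      also have "\<dots> \<le> n*m" using q by (intro mult_right_mono) auto
      finally show "q*m+t < m*n" by (simp add: mult.commute)
    qed
    show "(\<Sum>t<m. wr m n hs1 s1 $$ (r,q*m+t) * wr m n hs2 s2 $$ (q*m+t,c)) =
      (if q = q0 then (\<Sum>t<m. hs1 (r div m) $$ (r mod m, t) *
        (if q = s2 (c div m) then hs2 q $$ (t, c mod m) else 0)) else 0)"
      using qm r c by (auto simp: wr_index eq intro!: sum.cong)
  qed
  also have "\<dots> = (\<Sum>t<m. hs1 (r div m) $$ (r mod m, t) *
        (if q0 = s2 (c div m) then hs2 q0 $$ (t, c mod m) else 0))"
    using q0 by (simp add: sum.delta)
  also have "\<dots> = wr m n (\<lambda>i. hs1 i * hs2 (pinv s1 i)) (s1 \<circ> s2) $$ (r,c)"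
  proof -
    have e2: "(q0 = s2 (c div m)) = (r div m = (s1 \<circ> s2) (c div m))"
      using eq by auto
    have rm: "r mod m < m" "c mod m < m" using m by auto
    have pq: "pinv s1 (r div m) = q0" unfolding q0_def ..
    show ?thesis
    proof (cases "q0 = s2 (c div m)")
      case True
      then show ?thesis using r c rm h1[of "r div m"] h2[of q0] e2
        by (simp add: wr_index pq scalar_prod_def row_def col_def lessThan_atLeast0 permutes_inverses[OF s1])
    next
      case False
      then show ?thesis using r c rm e2
        by (simp add: wr_index)
    qed
  qed
  finally show "(wr m n hs1 s1 * wr m n hs2 s2) $$ (r,c) =
      wr m n (\<lambda>i. hs1 i * hs2 (pinv s1 i)) (s1 \<circ> s2) $$ (r,c)" .
qed auto


definition blk :: "nat \<Rightarrow> complex vec \<Rightarrow> nat \<Rightarrow> complex vec" where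
  "blk m x q = vec m (\<lambda>t. x $ (q*m+t))"

lemma blk_carrier[simp]: "blk m x q \<in> carrier_vec m" "dim_vec (blk m x q) = m"
  unfolding blk_def by auto

lemma blk_index[simp]: "t < m \<Longrightarrow> blk m x q $ t = x $ (q*m+t)"
  unfolding blk_def by auto

lemma qmt_less: "q < n \<Longrightarrow> t < m \<Longrightarrow> q*m+t < m*(n::nat)"
proof -
  assume q: "q < n" and t: "t < m"
  hence "q*m+t < q*m+m" by simp
  also have "\<dots> = (q+1)*m" by simp
  also have "\<dots> \<le> n*m" using q by (intro mult_right_mono) auto
  finally show ?thesis by (simp add: mult.commute)
qed

lemma blk_minus: "x \<in> carrier_vec (m*n) \<Longrightarrow> y \<in> carrier_vec (m*n) \<Longrightarrow> q < n \<Longrightarrow>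
   blk m (x - y) q = blk m x q - blk m y q"
  by (rule eq_vecI) (auto simp: qmt_less)

lemma vnorm_sq: "vnorm x ^ 2 = (\<Sum>i<dim_vec x. (cmod (x $ i))^2)"
  unfolding vnorm_def by (simp add: sum_nonneg)

lemma vnorm_nonneg: "vnorm x \<ge> 0" unfolding vnorm_def by (simp add: sum_nonneg)

lemma vnorm_blocks: "x \<in> carrier_vec (m*n) \<Longrightarrow> vnorm x ^ 2 = (\<Sum>q<n. vnorm (blk m x q) ^ 2)"
  unfolding vnorm_sq by (simp add: sum_blocks[of _ m n] blk_def qmt_less)

lemma vnorm_le_iff: "vnorm x \<le> vnorm y \<longleftrightarrow> vnorm x ^ 2 \<le> vnorm y ^ 2"
  using vnorm_nonneg[of x] vnorm_nonneg[of y] by (metis power2_le_imp_le power_mono)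

lemma vnorm_less_iff: "vnorm x < vnorm y \<longleftrightarrow> vnorm x ^ 2 < vnorm y ^ 2"
  using vnorm_nonneg[of x] vnorm_nonneg[of y] by (auto intro: power_less_imp_less_base power_strict_mono)

lemma vnorm_of_sum: "complex_of_real (vnorm x ^ 2) = (\<Sum>i<dim_vec x. x $ i * cnj (x $ i))"
proof -
  have "complex_of_real (vnorm x ^ 2) = (\<Sum>i<dim_vec x. complex_of_real ((cmod (x $ i))^2))"
    unfolding vnorm_sq of_real_sum ..
  also have "\<dots> = (\<Sum>i<dim_vec x. x $ i * cnj (x $ i))"
    by (rule sum.cong[OF refl]) (rule complex_norm_square)
  finally show ?thesis .
qed

lemma wr_mult_vec:
  assumes s: "s permutes {..<n}" and h: "\<And>i. hs i \<in> carrier_mat m m"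
    and x: "x \<in> carrier_vec (m*n)" and q: "q < n"
  shows "blk m (wr m n hs s *\<^sub>v x) q = hs q *\<^sub>v blk m x (pinv s q)"
proof (rule eq_vecI)
  define q0 where "q0 = pinv s q"
  have q0: "q0 < n" using permutes_in_image[OF permutes_inv[OF s]] q unfolding q0_def by auto
  have eq: "\<And>q'. (q = s q') = (q' = q0)"
    unfolding q0_def using permutes_inv_eq[OF s] by metis
  fix t assume "t < dim_vec (hs q *\<^sub>v blk m x (pinv s q))"
  hence t: "t < m" using h[of q] by auto
  have "blk m (wr m n hs s *\<^sub>v x) q $ t = (wr m n hs s *\<^sub>v x) $ (q*m+t)" using t by simp
  also have "\<dots> = (\<Sum>k<m*n. wr m n hs s $$ (q*m+t,k) * x $ k)"
    using qmt_less[OF q t] x by (simp add: scalar_prod_def row_def lessThan_atLeast0)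
  also have "\<dots> = (\<Sum>q'<n. \<Sum>t'<m. wr m n hs s $$ (q*m+t,q'*m+t') * x $ (q'*m+t'))"
    by (rule sum_blocks)
  also have "\<dots> = (\<Sum>q'<n. if q' = q0 then (\<Sum>t'<m. hs q $$ (t,t') * x $ (q'*m+t')) else 0)"
    using qmt_less[OF q t] qmt_less t
    by (intro sum.cong refl) (auto simp: wr_index eq intro!: sum.cong)
  also have "\<dots> = (\<Sum>t'<m. hs q $$ (t,t') * x $ (q0*m+t'))" using q0 by simp
  also have "\<dots> = (hs q *\<^sub>v blk m x (pinv s q)) $ t"
    using t h[of q] by (simp add: q0_def[symmetric] scalar_prod_def row_def lessThan_atLeast0)
  finally show "blk m (wr m n hs s *\<^sub>v x) q $ t = (hs q *\<^sub>v blk m x (pinv s q)) $ t" .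
qed (use h[of q] in auto)


lemma unitary_sum:
  assumes u: "unitary_mat m b" and k: "k < m" and j: "j < m"
  shows "(\<Sum>i<m. cnj (b $$ (i,k)) * b $$ (i,j)) = (if k = j then 1 else 0)"
proof -
  have b: "b \<in> carrier_mat m m" and e: "cadj b * b = 1\<^sub>m m" using u unfolding unitary_mat_def by auto
  have "(cadj b * b) $$ (k,j) = (\<Sum>i<m. cnj (b $$ (i,k)) * b $$ (i,j))"
    using b k j by (simp add: cadj_def scalar_prod_def row_def col_def lessThan_atLeast0)
  then show ?thesis using e k j by simp
qed

lemma unitary_norm:
  assumes u: "unitary_mat m b" and w: "w \<in> carrier_vec m"
  shows "vnorm (b *\<^sub>v w) = vnorm w"
proof -
  have b: "b \<in> carrier_mat m m" using u unfolding unitary_mat_def by auto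
  have bw: "\<And>i. i < m \<Longrightarrow> (b *\<^sub>v w) $ i = (\<Sum>j<m. b $$ (i,j) * w $ j)"
    using b w by (simp add: scalar_prod_def row_def lessThan_atLeast0)
  have "complex_of_real (vnorm (b *\<^sub>v w) ^ 2) = (\<Sum>i<m. (b *\<^sub>v w) $ i * cnj ((b *\<^sub>v w) $ i))"
    by (subst vnorm_of_sum) (use b in simp)
  also have "\<dots> = (\<Sum>i<m. (\<Sum>j<m. b $$ (i,j) * w $ j) * cnj (\<Sum>k<m. b $$ (i,k) * w $ k))"
    by (simp add: bw)
  also have "\<dots> = (\<Sum>i<m. \<Sum>j<m. \<Sum>k<m. w $ j * cnj (w $ k) * (cnj (b $$ (i,k)) * b $$ (i,j)))"
    unfolding cnj_sum sum_product by (intro sum.cong refl) (simp add: mult_ac)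
  also have "\<dots> = (\<Sum>j<m. \<Sum>i<m. \<Sum>k<m. w $ j * cnj (w $ k) * (cnj (b $$ (i,k)) * b $$ (i,j)))"
    by (rule sum.swap)
  also have "\<dots> = (\<Sum>j<m. \<Sum>k<m. \<Sum>i<m. w $ j * cnj (w $ k) * (cnj (b $$ (i,k)) * b $$ (i,j)))"
    by (intro sum.cong refl sum.swap)
  also have "\<dots> = (\<Sum>j<m. \<Sum>k<m. w $ j * cnj (w $ k) * (if k = j then 1 else 0))"
    by (intro sum.cong refl) (simp add: sum_distrib_left[symmetric] unitary_sum[OF u])
  also have "\<dots> = (\<Sum>j<m. w $ j * cnj (w $ j))"
    by (simp add: if_distrib cong: if_cong)
  also have "\<dots> = complex_of_real (vnorm w ^ 2)" by (subst vnorm_of_sum) (use w in simp)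
  finally have "vnorm (b *\<^sub>v w) ^ 2 = vnorm w ^ 2" using of_real_eq_iff by blast
  then show ?thesis using vnorm_nonneg by (metis power2_eq_iff_nonneg)
qed

definition rho :: "nat \<Rightarrow> complex vec \<Rightarrow> complex vec \<Rightarrow> real" where
  "rho m v0 w = Re (\<Sum>t<m. w $ t * cnj (v0 $ t))"

lemma cmod_diff_sq: "(cmod (a - complex_of_real t * b))^2 = (cmod a)^2 - 2*t*Re (a * cnj b) + t^2 * (cmod b)^2"
  unfolding cmod_power2 by (simp add: power2_eq_square algebra_simps)

lemma vnorm_diff_sq:
  assumes w: "w \<in> carrier_vec m" and v0: "v0 \<in> carrier_vec m" "vnorm v0 = 1"
  shows "vnorm (w - complex_of_real t \<cdot>\<^sub>v v0) ^ 2 = vnorm w ^ 2 - 2 * t * rho m v0 w + t^2"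
proof -
  have "vnorm (w - complex_of_real t \<cdot>\<^sub>v v0) ^ 2 =
     (\<Sum>i<m. (cmod (w $ i))^2 - 2*t*Re (w $ i * cnj (v0 $ i)) + t^2 * (cmod (v0 $ i))^2)"
    using w v0 by (simp add: vnorm_sq cmod_diff_sq)
  also have "\<dots> = (\<Sum>i<m. (cmod (w $ i))^2) - 2*t*(\<Sum>i<m. Re (w $ i * cnj (v0 $ i)))
       + t^2 * (\<Sum>i<m. (cmod (v0 $ i))^2)"
    by (simp only: sum.distrib sum_subtractf sum_distrib_left)
  also have "(\<Sum>i<m. (cmod (v0 $ i))^2) = 1" using v0 vnorm_sq[of v0] by simp
  also have "(\<Sum>i<m. (cmod (w $ i))^2) = vnorm w ^ 2" using w vnorm_sq[of w] by simp
  also have "(\<Sum>i<m. Re (w $ i * cnj (v0 $ i))) = rho m v0 w" unfolding rho_def Re_sum ..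
  finally show ?thesis by simp
qed


lemma rearr:
  fixes a b :: "nat \<Rightarrow> real"
  assumes "\<And>i j. i \<le> j \<Longrightarrow> j < N \<Longrightarrow> a i \<le> a j" "\<And>i j. i \<le> j \<Longrightarrow> j < N \<Longrightarrow> b i \<le> b j"
    and "s permutes {..<N}"
  shows "(\<Sum>q<N. a (s q) * b q) \<le> (\<Sum>q<N. a q * b q)"
  using assms
proof (induction N arbitrary: s)
  case 0
  then show ?case by simp
next
  case (Suc N)
  have sN: "s permutes insert N {..<N}" using Suc.prems(3) by (simp add: lessThan_Suc)
  define s' where "s' = Transposition.transpose N (s N) \<circ> s"
  have s': "s' permutes {..<N}" unfolding s'_def by (rule permutes_insert_lemma[OF sN])
  have IH: "(\<Sum>q<N. a (s' q) * b q) \<le> (\<Sum>q<N. a q * b q)"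
    by (rule Suc.IH[OF _ _ s']) (use Suc.prems in auto)
  have sNle: "s N \<le> N" using permutes_in_image[OF Suc.prems(3), of N] by auto
  define p where "p = pinv s N"
  have sp: "s p = N" unfolding p_def using permutes_inverses[OF Suc.prems(3)] by simp
  have pN: "p \<le> N" using permutes_in_image[OF Suc.prems(3), of p] sp by auto
  have aN: "a (s N) \<le> a N" using Suc.prems(1)[OF sNle] by simp
  show ?case
  proof (cases "p = N")
    case True
    hence "s' = s" using sp unfolding s'_def by auto
    then show ?thesis using IH True sp by simp
  next
    case False
    hence pN': "p < N" using pN by simp
    have s'q: "\<And>q. q \<noteq> p \<Longrightarrow> q \<noteq> N \<Longrightarrow> s' q = s q"
    proof -
      fix q assume "q \<noteq> p" "q \<noteq> N"
      hence "s q \<noteq> N" "s q \<noteq> s N" using sp permutes_inj[OF Suc.prems(3)] by (auto dest: injD)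
      thus "s' q = s q" unfolding s'_def by simp
    qed
    have s'p: "s' p = s N" unfolding s'_def using sp by simp
    have "(\<Sum>q<N. a (s q) * b q) = (\<Sum>q<N. a (s' q) * b q) + (a N - a (s N)) * b p"
    proof -
      have "(\<Sum>q<N. a (s q) * b q) = (\<Sum>q<N. a (s' q) * b q + (if q = p then (a N - a (s N)) * b p else 0))"
        using s'q s'p sp by (intro sum.cong refl) (auto simp: algebra_simps)
      also have "\<dots> = (\<Sum>q<N. a (s' q) * b q) + (a N - a (s N)) * b p"
        using pN' by (simp add: sum.distrib)
      finally show ?thesis .
    qed
    moreover have "(a N - a (s N)) * b p \<le> (a N - a (s N)) * b N"
      using aN Suc.prems(2)[of p N] pN by (intro mult_left_mono) auto
    ultimately show ?thesis using IH by (simp add: algebra_simps)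
  qed
qed


lemma sum_pinv:
  assumes "s permutes {..<n}"
  shows "(\<Sum>q<n. f (pinv s q)) = (\<Sum>q<n. (f q :: 'a :: comm_monoid_add))"
  using sum.reindex_bij_betw[OF permutes_imp_bij[OF permutes_inv[OF assms]], of f] by simp

lemma sum_perm:
  assumes "s permutes {..<n}"
  shows "(\<Sum>q<n. f (s q)) = (\<Sum>q<n. (f q :: 'a :: comm_monoid_add))"
  using sum.reindex_bij_betw[OF permutes_imp_bij[OF assms], of f] by simp

definition slot :: "nat \<Rightarrow> nat \<Rightarrow> complex mat \<Rightarrow> nat \<Rightarrow> complex mat" where
  "slot m p b = (\<lambda>i. if i = p then b else 1\<^sub>m m)"

definition cycinv :: "nat \<Rightarrow> nat \<Rightarrow> nat \<Rightarrow> nat" where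
  "cycinv a b i = (if a < i \<and> i \<le> b then i - 1 else if i = a then b else i)"

lemma cyc_cycinv: "a \<le> b \<Longrightarrow> cyc a b (cycinv a b i) = i" "a \<le> b \<Longrightarrow> cycinv a b (cyc a b i) = i"
  unfolding cyc_def cycinv_def by auto

lemma pinv_cyc: "a \<le> b \<Longrightarrow> pinv (cyc a b) = cycinv a b"
  by (rule inv_equality) (auto simp: cyc_cycinv)

lemma cyc_permutes: assumes "a \<le> b" "b < n" shows "cyc a b permutes {..<n}"
proof -
  have "bij (cyc a b)" using cyc_cycinv[OF assms(1)] by (metis bij_betw_byWitness subset_UNIV)
  moreover have "\<forall>x. x \<notin> {..<n} \<longrightarrow> cyc a b x = x" using assms unfolding cyc_def by auto
  ultimately show ?thesis unfolding permutes_def bij_iff by auto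
qed

lemma adjswap_invol: "adjswap i (adjswap i k) = k"
  unfolding adjswap_def by auto

lemma pinv_adjswap: "pinv (adjswap i) = adjswap i"
  by (rule inv_equality) (auto simp: adjswap_invol)

lemma adjswap_permutes: assumes "i + 1 < n" shows "adjswap i permutes {..<n}"
proof -
  have "bij (adjswap i)" using adjswap_invol by (metis bij_betw_byWitness subset_UNIV)
  moreover have "\<forall>x. x \<notin> {..<n} \<longrightarrow> adjswap i x = x" using assms unfolding adjswap_def by auto
  ultimately show ?thesis unfolding permutes_def bij_iff by auto
qed

locale wsetup =
  fixes m n :: nat and H :: "complex mat set" and v0 :: "complex vec" and u :: "nat \<Rightarrow> real"
  assumes H: "finite_unitary_group m H"
    and v0: "v0 \<in> carrier_vec m" and v0n: "vnorm v0 = 1"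
    and v0_min: "\<forall>h \<in> H - {1\<^sub>m m}. vnorm (1\<^sub>m m *\<^sub>v v0 - v0) < vnorm (h *\<^sub>v v0 - v0)"
    and u_pos: "0 < u 0"
    and u_inc: "\<forall>i. i + 1 < n \<longrightarrow> u i < u (i + 1)"
    and n_pos: "0 < n"
begin

abbreviation "x0 \<equiv> init_vec m n u v0"

definition good :: "(nat \<Rightarrow> complex mat) \<Rightarrow> (nat \<Rightarrow> nat) \<Rightarrow> bool" where
  "good hs s \<longleftrightarrow> s permutes {..<n} \<and> (\<forall>i<n. hs i \<in> H) \<and> (\<forall>i. n \<le> i \<longrightarrow> hs i = 1\<^sub>m m)"

definition score :: "(nat \<Rightarrow> complex mat) \<Rightarrow> (nat \<Rightarrow> nat) \<Rightarrow> complex vec \<Rightarrow> real" where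
  "score hs s y = (\<Sum>q<n. u q * rho m v0 (hs q *\<^sub>v blk m y (pinv s q)))"

lemma m_pos: "0 < m"
proof (rule ccontr)
  assume "\<not> 0 < m"
  hence "dim_vec v0 = 0" using v0 by simp
  hence "vnorm v0 = 0" unfolding vnorm_def by simp
  thus False using v0n by simp
qed

lemma H_unitary: "b \<in> H \<Longrightarrow> unitary_mat m b"
  using H unfolding finite_unitary_group_def by auto

lemma H_carrier: "b \<in> H \<Longrightarrow> b \<in> carrier_mat m m"
  using H_unitary unfolding unitary_mat_def by auto

lemma H_one: "1\<^sub>m m \<in> H" using H unfolding finite_unitary_group_def by auto

lemma H_mult: "a \<in> H \<Longrightarrow> b \<in> H \<Longrightarrow> a * b \<in> H" using H unfolding finite_unitary_group_def by auto

lemma H_inv: "a \<in> H \<Longrightarrow> \<exists>b\<in>H. a * b = 1\<^sub>m m \<and> b * a = 1\<^sub>m m"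
proof -
  assume a: "a \<in> H"
  then obtain b where b: "b \<in> H" "a * b = 1\<^sub>m m" using H unfolding finite_unitary_group_def by auto
  have "b * a = 1\<^sub>m m" using mat_mult_left_right_inverse[OF H_carrier[OF a] H_carrier[OF b(1)] b(2)] .
  thus ?thesis using b by auto
qed

lemma H_finite: "finite H" using H unfolding finite_unitary_group_def by auto

lemma H_nonzero: "b \<in> H \<Longrightarrow> \<exists>t t'. t < m \<and> t' < m \<and> b $$ (t,t') \<noteq> 0"
proof (rule ccontr)
  assume b: "b \<in> H" and "\<not> (\<exists>t t'. t < m \<and> t' < m \<and> b $$ (t,t') \<noteq> 0)"
  hence z: "\<And>t t'. t < m \<Longrightarrow> t' < m \<Longrightarrow> b $$ (t,t') = 0" by auto
  obtain c where c: "c \<in> H" "c * b = 1\<^sub>m m" using H_inv[OF b] by auto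
  have "(c * b) $$ (0,0) = 0"
    using z m_pos H_carrier[OF b] H_carrier[OF c(1)] by (simp add: scalar_prod_def col_def)
  thus False using c m_pos by simp
qed

lemma good_carrier: "good hs s \<Longrightarrow> hs i \<in> carrier_mat m m"
  unfolding good_def using H_carrier by (cases "i < n") auto

lemma GG_eq: "GG m n H = {wr m n hs s |hs s. good hs s}"
  unfolding GG_def wr_sub_def good_def by auto

lemma u_mono: "i \<le> j \<Longrightarrow> j < n \<Longrightarrow> u i \<le> u j"
proof (induction j)
  case 0 thus ?case by simp
next
  case (Suc j) thus ?case using u_inc by (cases "i = Suc j") (auto intro: order.trans less_imp_le)
qed

lemma u_strict: "i < j \<Longrightarrow> j < n \<Longrightarrow> u i < u j"
  using u_mono u_inc by (metis Suc_eq_plus1 Suc_leI le_less_trans less_le_trans order.strict_implies_order)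

lemma u_pos': "q < n \<Longrightarrow> 0 < u q"
  using u_mono[of 0 q] u_pos by auto

lemma x0_carrier: "x0 \<in> carrier_vec (m*n)" unfolding init_vec_def by simp

lemma blk_x0: "q < n \<Longrightarrow> blk m x0 q = complex_of_real (u q) \<cdot>\<^sub>v v0"
  by (rule eq_vecI) (use v0 in \<open>auto simp: init_vec_def qmt_less\<close>)

end

lemma vnorm_smult: "vnorm (a \<cdot>\<^sub>v v) = cmod a * vnorm v"
proof -
  have "vnorm (a \<cdot>\<^sub>v v) ^ 2 = (cmod a * vnorm v) ^ 2"
    by (simp add: vnorm_sq power_mult_distrib norm_mult sum_distrib_left)
  thus ?thesis using vnorm_nonneg[of v] vnorm_nonneg[of "a \<cdot>\<^sub>v v"]
    by (metis norm_ge_zero power2_eq_iff_nonneg zero_le_mult_iff)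
qed

lemma wr_one: "wr m n (\<lambda>_. 1\<^sub>m m) id = 1\<^sub>m (m*n)"
proof (rule eq_matI)
  fix r c assume "r < dim_row (1\<^sub>m (m*n))" "c < dim_col (1\<^sub>m (m*n))"
  hence r: "r < m*n" and c: "c < m*n" by auto
  hence mp: "0 < m" by (cases m) auto
  have e: "(r = c) = (r div m = c div m \<and> r mod m = c mod m)" by (metis div_mult_mod_eq)
  show "wr m n (\<lambda>_. 1\<^sub>m m) id $$ (r,c) = 1\<^sub>m (m*n) $$ (r,c)"
    using r c mp e by (simp add: wr_index)
qed auto

lemma wr_ones_mult:
  assumes "s1 permutes {..<n}" "s2 permutes {..<n}"
  shows "wr m n (\<lambda>_. 1\<^sub>m m) s1 * wr m n (\<lambda>_. 1\<^sub>m m) s2 = wr m n (\<lambda>_. 1\<^sub>m m) (s1 \<circ> s2)"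
proof -
  have "wr m n (\<lambda>_. 1\<^sub>m m) s1 * wr m n (\<lambda>_. 1\<^sub>m m) s2 = wr m n (\<lambda>i. 1\<^sub>m m * 1\<^sub>m m) (s1 \<circ> s2)"
    by (rule wr_mult[OF assms]) auto
  thus ?thesis by simp
qed

lemma abbrevdummy: True ..

context wsetup begin

lemma good_one: "good (\<lambda>_. 1\<^sub>m m) id"
  unfolding good_def using H_one by (auto simp: permutes_id)

lemma good_slot: "p < n \<Longrightarrow> b \<in> H \<Longrightarrow> good (slot m p b) id"
  unfolding good_def slot_def using H_one by (auto simp: permutes_id)

lemma good_cyc: "j \<le> l \<Longrightarrow> l < n \<Longrightarrow> good (\<lambda>_. 1\<^sub>m m) (cyc j l)"
  unfolding good_def using H_one cyc_permutes by auto

lemma good_adjswap: "i + 1 < n \<Longrightarrow> good (\<lambda>_. 1\<^sub>m m) (adjswap i)"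
  unfolding good_def using H_one adjswap_permutes by auto

lemma good_mult:
  assumes g1: "good hs1 s1" and g2: "good hs2 s2"
  shows "good (\<lambda>i. hs1 i * hs2 (pinv s1 i)) (s1 \<circ> s2)"
proof -
  have s1: "s1 permutes {..<n}" and s2: "s2 permutes {..<n}" using g1 g2 unfolding good_def by auto
  have "s1 \<circ> s2 permutes {..<n}" using permutes_compose[OF s2 s1] .
  moreover have "\<forall>i<n. hs1 i * hs2 (pinv s1 i) \<in> H"
  proof (intro allI impI)
    fix i assume i: "i < n"
    hence "pinv s1 i < n" using permutes_in_image[OF permutes_inv[OF s1]] by auto
    thus "hs1 i * hs2 (pinv s1 i) \<in> H" using i g1 g2 H_mult unfolding good_def by auto
  qed
  moreover have "\<forall>i. n \<le> i \<longrightarrow> hs1 i * hs2 (pinv s1 i) = 1\<^sub>m m"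
  proof (intro allI impI)
    fix i assume i: "n \<le> i"
    hence "pinv s1 i = i" using permutes_not_in[OF permutes_inv[OF s1]] by auto
    thus "hs1 i * hs2 (pinv s1 i) = 1\<^sub>m m" using i g1 g2 unfolding good_def by auto
  qed
  ultimately show ?thesis unfolding good_def by auto
qed

lemma wr_mult_good:
  assumes "good hs1 s1" "good hs2 s2"
  shows "wr m n hs1 s1 * wr m n hs2 s2 = wr m n (\<lambda>i. hs1 i * hs2 (pinv s1 i)) (s1 \<circ> s2)"
  by (rule wr_mult[OF _ _ good_carrier[OF assms(1)] good_carrier[OF assms(2)]]) (use assms in \<open>auto simp: good_def\<close>)

lemma GG_mult: "a \<in> GG m n H \<Longrightarrow> b \<in> GG m n H \<Longrightarrow> a * b \<in> GG m n H"
proof -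
  assume "a \<in> GG m n H" "b \<in> GG m n H"
  then obtain hs1 s1 hs2 s2 where g: "good hs1 s1" "good hs2 s2" and ab: "a = wr m n hs1 s1" "b = wr m n hs2 s2"
    unfolding GG_eq by auto
  have "wr m n (\<lambda>i. hs1 i * hs2 (pinv s1 i)) (s1 \<circ> s2) \<in> GG m n H"
    unfolding GG_eq using good_mult[OF g] by (intro CollectI exI conjI) (rule refl)
  thus ?thesis unfolding ab wr_mult_good[OF g] .
qed

lemma GG_carrier: "a \<in> GG m n H \<Longrightarrow> a \<in> carrier_mat (m*n) (m*n)"
  unfolding GG_eq by auto

lemma GG_one: "1\<^sub>m (m*n) \<in> GG m n H"
proof -
  have "wr m n (\<lambda>_. 1\<^sub>m m) id \<in> GG m n H"
    unfolding GG_eq using good_one by (intro CollectI exI conjI) (rule refl)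
  thus ?thesis unfolding wr_one .
qed

lemma good_inv:
  assumes g: "good hs s"
  shows "\<exists>hs' s'. good hs' s' \<and> wr m n hs' s' * wr m n hs s = 1\<^sub>m (m*n)"
proof -
  have s: "s permutes {..<n}" using g unfolding good_def by auto
  define hs' where "hs' i = (if i < n then (SOME b. b \<in> H \<and> b * hs (s i) = 1\<^sub>m m) else 1\<^sub>m m)" for i
  have hs': "hs' i \<in> H \<and> hs' i * hs (s i) = 1\<^sub>m m" if i: "i < n" for i
  proof -
    have "s i < n" using permutes_in_image[OF s] i by auto
    hence "hs (s i) \<in> H" using g unfolding good_def by auto
    then obtain b where b: "b \<in> H \<and> b * hs (s i) = 1\<^sub>m m" using H_inv by blast
    have "hs' i = (SOME b. b \<in> H \<and> b * hs (s i) = 1\<^sub>m m)" unfolding hs'_def using i by simp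
    thus ?thesis using someI[of "\<lambda>b. b \<in> H \<and> b * hs (s i) = 1\<^sub>m m", OF b] by simp
  qed
  have hs'o: "hs' i = 1\<^sub>m m" if "\<not> i < n" for i unfolding hs'_def using that by simp
  have g': "good hs' (pinv s)"
    unfolding good_def using hs' hs'o permutes_inv[OF s] by simp
  have "wr m n hs' (pinv s) * wr m n hs s = wr m n (\<lambda>i. hs' i * hs (pinv (pinv s) i)) (pinv s \<circ> s)"
    by (rule wr_mult_good[OF g' g])
  also have "(\<lambda>i. hs' i * hs (pinv (pinv s) i)) = (\<lambda>_. 1\<^sub>m m)"
  proof
    fix i show "hs' i * hs (pinv (pinv s) i) = 1\<^sub>m m"
    proof (cases "i < n")
      case True thus ?thesis using hs' unfolding permutes_inv_inv[OF s] by simp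
    next
      case False
      hence "s i = i" "hs i = 1\<^sub>m m" using permutes_not_in[OF s, of i] g unfolding good_def by auto
      thus ?thesis using hs'o[OF False] unfolding permutes_inv_inv[OF s] by simp
    qed
  qed
  also have "pinv s \<circ> s = id" using permutes_inv_o(2)[OF s] .
  finally have "wr m n hs' (pinv s) * wr m n hs s = 1\<^sub>m (m*n)" unfolding wr_one .
  thus ?thesis using g' by blast
qed

lemma GG_inv: "a \<in> GG m n H \<Longrightarrow> \<exists>a'\<in>GG m n H. a' * a = 1\<^sub>m (m*n) \<and> a * a' = 1\<^sub>m (m*n)"
proof -
  assume "a \<in> GG m n H"
  then obtain hs s where g: "good hs s" and a: "a = wr m n hs s" unfolding GG_eq by auto
  obtain hs' s' where g': "good hs' s'" and e: "wr m n hs' s' * wr m n hs s = 1\<^sub>m (m*n)"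
    using good_inv[OF g] by auto
  have "wr m n hs s * wr m n hs' s' = 1\<^sub>m (m*n)"
    using mat_mult_left_right_inverse[OF wr_carrier wr_carrier e] .
  thus ?thesis using e a g' unfolding GG_eq by auto
qed

lemma wr_inj:
  assumes g: "good hs s" and g': "good hs' s'" and e: "wr m n hs s = wr m n hs' s'"
  shows "hs = hs' \<and> s = s'"
proof -
  have s: "s permutes {..<n}" and s': "s' permutes {..<n}" using g g' unfolding good_def by auto
  have entry: "\<And>c t t'. c < n \<Longrightarrow> t < m \<Longrightarrow> t' < m \<Longrightarrow>
     hs (s c) $$ (t,t') = (if s c = s' c then hs' (s c) $$ (t,t') else 0)"
  proof -
    fix c t t' assume c: "c < n" and t: "t < m" and t': "t' < m"
    have sc: "s c < n" using permutes_in_image[OF s] c by auto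
    have "wr m n hs s $$ (s c * m + t, c * m + t') = wr m n hs' s' $$ (s c * m + t, c * m + t')" using e by simp
    thus "hs (s c) $$ (t,t') = (if s c = s' c then hs' (s c) $$ (t,t') else 0)"
      using qmt_less[OF sc t] qmt_less[OF c t'] t t' by (simp add: wr_index)
  qed
  have seq: "\<And>c. c < n \<Longrightarrow> s c = s' c"
  proof (rule ccontr)
    fix c assume c: "c < n" and ne: "s c \<noteq> s' c"
    have sc: "s c < n" using permutes_in_image[OF s] c by auto
    hence "hs (s c) \<in> H" using g unfolding good_def by auto
    then obtain t t' where "t < m" "t' < m" "hs (s c) $$ (t,t') \<noteq> 0" using H_nonzero by blast
    thus False using entry[OF c] ne by auto
  qed
  have ss: "s = s'"
  proof
    fix x show "s x = s' x"
      using seq permutes_not_in[OF s, of x] permutes_not_in[OF s', of x] by (cases "x < n") auto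
  qed
  have "hs i = hs' i" for i
  proof (cases "i < n")
    case True
    define c where "c = pinv s i"
    have c: "c < n" using permutes_in_image[OF permutes_inv[OF s]] True unfolding c_def by auto
    have sc: "s c = i" unfolding c_def using permutes_inverses[OF s] by simp
    show ?thesis
    proof (rule eq_matI)
      fix t t' assume "t < dim_row (hs' i)" "t' < dim_col (hs' i)"
      hence "t < m" "t' < m" using good_carrier[OF g', of i] by auto
      thus "hs i $$ (t,t') = hs' i $$ (t,t')" using entry[OF c] sc ss by auto
    qed (use good_carrier[OF g, of i] good_carrier[OF g', of i] in auto)
  next
    case False thus ?thesis using g g' unfolding good_def by auto
  qed
  thus ?thesis using ss by auto
qed

lemma blk_wr: "good hs s \<Longrightarrow> y \<in> carrier_vec (m*n) \<Longrightarrow> q < n \<Longrightarrow>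
    blk m (wr m n hs s *\<^sub>v y) q = hs q *\<^sub>v blk m y (pinv s q)"
  by (rule wr_mult_vec[OF _ good_carrier]) (auto simp: good_def)

lemma pinv_less: "good hs s \<Longrightarrow> q < n \<Longrightarrow> pinv s q < n"
  unfolding good_def using permutes_in_image[OF permutes_inv, of s "{..<n}" q] by auto

lemma GG_norm:
  assumes a: "a \<in> GG m n H" and z: "z \<in> carrier_vec (m*n)"
  shows "vnorm (a *\<^sub>v z) = vnorm z"
proof -
  obtain hs s where g: "good hs s" and a: "a = wr m n hs s" using a unfolding GG_eq by auto
  have s: "s permutes {..<n}" using g unfolding good_def by auto
  have "vnorm (a *\<^sub>v z) ^ 2 = (\<Sum>q<n. vnorm (blk m (a *\<^sub>v z) q) ^ 2)"
    using a z by (intro vnorm_blocks) (auto intro: mult_mat_vec_carrier[OF wr_carrier])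
  also have "\<dots> = (\<Sum>q<n. vnorm (blk m z (pinv s q)) ^ 2)"
  proof (rule sum.cong[OF refl])
    fix q assume q: "q \<in> {..<n}"
    have "hs q \<in> H" using g q unfolding good_def by auto
    thus "vnorm (blk m (a *\<^sub>v z) q) ^ 2 = vnorm (blk m z (pinv s q)) ^ 2"
      using blk_wr[OF g z] q a unitary_norm[OF H_unitary] by auto
  qed
  also have "\<dots> = (\<Sum>q<n. vnorm (blk m z q) ^ 2)" by (rule sum_pinv[OF s])
  also have "\<dots> = vnorm z ^ 2" using vnorm_blocks[OF z] by simp
  finally show ?thesis using vnorm_nonneg by (metis power2_eq_iff_nonneg)
qed

lemma dist:
  assumes g: "good hs s" and y: "y \<in> carrier_vec (m*n)"
  shows "vnorm (wr m n hs s *\<^sub>v y - x0) ^ 2 =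
     (\<Sum>q<n. vnorm (blk m y q) ^ 2) + (\<Sum>q<n. u q ^ 2) - 2 * score hs s y"
proof -
  have s: "s permutes {..<n}" using g unfolding good_def by auto
  have wy: "wr m n hs s *\<^sub>v y \<in> carrier_vec (m*n)" using mult_mat_vec_carrier[OF wr_carrier y] .
  have c: "wr m n hs s *\<^sub>v y - x0 \<in> carrier_vec (m*n)" using wy x0_carrier by auto
  have "vnorm (wr m n hs s *\<^sub>v y - x0) ^ 2 = (\<Sum>q<n. vnorm (blk m (wr m n hs s *\<^sub>v y - x0) q) ^ 2)"
    by (rule vnorm_blocks[OF c])
  also have "\<dots> = (\<Sum>q<n. vnorm (blk m y (pinv s q)) ^ 2 - 2 * u q * rho m v0 (hs q *\<^sub>v blk m y (pinv s q)) + u q ^ 2)"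
  proof (rule sum.cong[OF refl])
    fix q assume q: "q \<in> {..<n}"
    have h: "hs q \<in> H" using g q unfolding good_def by auto
    have "blk m (wr m n hs s *\<^sub>v y - x0) q = hs q *\<^sub>v blk m y (pinv s q) - complex_of_real (u q) \<cdot>\<^sub>v v0"
      using blk_minus[OF wy x0_carrier, of q] q blk_wr[OF g y] blk_x0 by auto
    moreover have "hs q *\<^sub>v blk m y (pinv s q) \<in> carrier_vec m" using H_carrier[OF h] by auto
    ultimately show "vnorm (blk m (wr m n hs s *\<^sub>v y - x0) q) ^ 2 =
       vnorm (blk m y (pinv s q)) ^ 2 - 2 * u q * rho m v0 (hs q *\<^sub>v blk m y (pinv s q)) + u q ^ 2"
      using vnorm_diff_sq[OF _ v0 v0n] unitary_norm[OF H_unitary[OF h]] by simp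
  qed
  also have "\<dots> = (\<Sum>q<n. vnorm (blk m y (pinv s q)) ^ 2) + (\<Sum>q<n. u q ^ 2) - 2 * score hs s y"
    by (simp add: score_def sum.distrib sum_subtractf sum_distrib_left mult.assoc)
  also have "(\<Sum>q<n. vnorm (blk m y (pinv s q)) ^ 2) = (\<Sum>q<n. vnorm (blk m y q) ^ 2)"
    by (rule sum_pinv[OF s])
  finally show ?thesis .
qed

lemma stab_trivial:
  assumes a: "a \<in> GG m n H" and e: "a *\<^sub>v x0 = x0"
  shows "a = 1\<^sub>m (m*n)"
proof -
  obtain hs s where g: "good hs s" and a: "a = wr m n hs s" using assms unfolding GG_eq by auto
  have s: "s permutes {..<n}" using g unfolding good_def by auto
  have bq: "hs q *\<^sub>v (complex_of_real (u (pinv s q)) \<cdot>\<^sub>v v0) = complex_of_real (u q) \<cdot>\<^sub>v v0"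
    if q: "q < n" for q
  proof -
    have "blk m (a *\<^sub>v x0) q = blk m x0 q" using e by simp
    thus ?thesis unfolding a blk_wr[OF g x0_carrier q] blk_x0[OF q] blk_x0[OF pinv_less[OF g q]] .
  qed
  have pq: "\<And>q. q < n \<Longrightarrow> pinv s q = q"
  proof -
    fix q assume q: "q < n"
    have h: "hs q \<in> H" using g q unfolding good_def by auto
    have pl: "pinv s q < n" using pinv_less[OF g q] .
    have "vnorm (hs q *\<^sub>v (complex_of_real (u (pinv s q)) \<cdot>\<^sub>v v0)) = u (pinv s q)"
      using unitary_norm[OF H_unitary[OF h]] v0 v0n vnorm_smult u_pos'[OF pl] by simp
    moreover have "vnorm (complex_of_real (u q) \<cdot>\<^sub>v v0) = u q" using v0n vnorm_smult u_pos'[OF q] by simp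
    ultimately have "u (pinv s q) = u q" using bq[OF q] by simp
    thus "pinv s q = q" using u_strict pl q by (metis linorder_neqE_nat less_irrefl)
  qed
  have sid: "s = id"
  proof
    fix x show "s x = id x"
      using pq[of x] permutes_inverses[OF s, of x] permutes_not_in[OF s, of x] by (cases "x < n") auto
  qed
  have hq: "\<And>q. q < n \<Longrightarrow> hs q = 1\<^sub>m m"
  proof (rule ccontr)
    fix q assume q: "q < n" and ne: "hs q \<noteq> 1\<^sub>m m"
    have h: "hs q \<in> H" using g q unfolding good_def by auto
    have "complex_of_real (u q) \<cdot>\<^sub>v (hs q *\<^sub>v v0) = complex_of_real (u q) \<cdot>\<^sub>v v0"
      using bq[OF q] pq[OF q] mult_mat_vec[OF H_carrier[OF h] v0] by simp
    hence "inverse (complex_of_real (u q)) \<cdot>\<^sub>v (complex_of_real (u q) \<cdot>\<^sub>v (hs q *\<^sub>v v0))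
       = inverse (complex_of_real (u q)) \<cdot>\<^sub>v (complex_of_real (u q) \<cdot>\<^sub>v v0)" by simp
    hence "hs q *\<^sub>v v0 = v0" using u_pos'[OF q] by (simp add: smult_smult_assoc)
    hence "vnorm (hs q *\<^sub>v v0 - v0) = vnorm (1\<^sub>m m *\<^sub>v v0 - v0)" using v0 by simp
    moreover have "hs q \<in> H - {1\<^sub>m m}" using h ne by simp
    ultimately show False using v0_min by (metis less_irrefl)
  qed
  have "hs = (\<lambda>_. 1\<^sub>m m)" using hq g unfolding good_def by (metis linorder_not_le)
  thus ?thesis using a sid wr_one by simp
qed

end

lemma cycinv_sum:
  fixes f g :: "nat \<Rightarrow> real"
  assumes jl: "j < l" and ln: "l < n"
  shows "(\<Sum>q<n. f q * g (cycinv (j+1) l q)) = (\<Sum>q<n. f q * g (cycinv j l q)) + (f (j+1) - f j) * (g l - g j)"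
proof -
  have "(\<Sum>q<n. f q * g (cycinv (j+1) l q)) = (\<Sum>q<n. f q * g (cycinv j l q)
      + ((if q = j then f j * (g j - g l) else 0) + (if q = j+1 then f (j+1) * (g l - g j) else 0)))"
    using jl by (intro sum.cong refl) (auto simp: cycinv_def algebra_simps)
  also have "\<dots> = (\<Sum>q<n. f q * g (cycinv j l q)) + (f j * (g j - g l) + f (j+1) * (g l - g j))"
    using jl ln by (simp add: sum.distrib)
  finally show ?thesis by (simp add: algebra_simps)
qed

lemma cycinv_le: "j \<le> l \<Longrightarrow> q \<le> l \<Longrightarrow> cycinv j l q \<le> l"
  unfolding cycinv_def by auto

context wsetup begin

lemma Gk1: "Gk m n H 1 = {wr m n (slot m 0 b) id | b. b \<in> H}"
proof (intro equalityI subsetI)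
  have one: "{..<(1::nat)} = {0}" by auto
  fix x assume "x \<in> Gk m n H 1"
  then obtain hs s where x: "x = wr m n hs s" and s: "s permutes {..<1}" and h0: "\<forall>i<1. hs i \<in> H"
    and h1: "\<forall>i. 1 \<le> i \<longrightarrow> hs i = 1\<^sub>m m"
    unfolding Gk_def wr_sub_def by auto
  have sid: "s = id" using s unfolding one by simp
  have "hs = slot m 0 (hs 0)" unfolding slot_def fun_eq_iff using h1 by simp
  hence "x = wr m n (slot m 0 (hs 0)) id" unfolding x sid by simp
  moreover have "hs 0 \<in> H" using h0 by simp
  ultimately show "x \<in> {wr m n (slot m 0 b) id | b. b \<in> H}" by blast
next
  fix x assume "x \<in> {wr m n (slot m 0 b) id | b. b \<in> H}"
  then obtain b where x: "x = wr m n (slot m 0 b) id" and b: "b \<in> H" by blast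
  have "id permutes {..<(1::nat)}" by simp
  moreover have "\<forall>i<1. slot m 0 b i \<in> H" using b unfolding slot_def by simp
  moreover have "\<forall>i. 1 \<le> i \<longrightarrow> slot m 0 b i = 1\<^sub>m m" unfolding slot_def by simp
  ultimately have "x \<in> wr_sub m n H 1 1" unfolding wr_sub_def x by blast
  thus "x \<in> Gk m n H 1" unfolding Gk_def by simp
qed

lemma CL_diag:
  assumes k: "k = 1 \<or> even k"
  shows "CL m n H k = {wr m n (slot m (k div 2) b) id | b. b \<in> H}"
proof (cases "k = 1")
  case True
  thus ?thesis unfolding CL_def using Gk1 by simp
next
  case False
  hence "even k" using k by auto
  thus ?thesis using False unfolding CL_def slot_def by simp
qed

lemma CL_cyc:
  assumes "odd k" "k \<noteq> 1"
  shows "CL m n H k = {wr m n (\<lambda>_. 1\<^sub>m m) (cyc j (k div 2)) | j. j \<le> k div 2}"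
  using assms unfolding CL_def by simp

lemma in_GG: "good hs s \<Longrightarrow> wr m n hs s \<in> GG m n H"
  unfolding GG_eq by (intro CollectI exI conjI) (rule refl)

lemma CL_sub_GG:
  assumes k: "1 \<le> k" "k \<le> 2*n-1"
  shows "CL m n H k \<subseteq> GG m n H"
proof
  fix x assume x: "x \<in> CL m n H k"
  have kn: "k div 2 < n" using k by auto
  show "x \<in> GG m n H"
  proof (cases "k = 1 \<or> even k")
    case True
    then obtain b where "x = wr m n (slot m (k div 2) b) id" "b \<in> H" using x unfolding CL_diag[OF True] by blast
    thus ?thesis using good_slot[OF kn] in_GG by simp
  next
    case False
    then obtain j where "x = wr m n (\<lambda>_. 1\<^sub>m m) (cyc j (k div 2))" "j \<le> k div 2"
    proof -
      have "odd k" "k \<noteq> 1" using False by auto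
      thus ?thesis using x that unfolding CL_cyc[OF \<open>odd k\<close> \<open>k \<noteq> 1\<close>] by blast
    qed
    thus ?thesis using good_cyc[OF _ kn] in_GG by simp
  qed
qed

lemma score_slot:
  assumes p: "p < n" and b: "b \<in> H" and y: "y \<in> carrier_vec (m*n)"
  shows "score (slot m p b) id y = (\<Sum>q<n. u q * rho m v0 (blk m y q))
     + u p * (rho m v0 (b *\<^sub>v blk m y p) - rho m v0 (blk m y p))"
proof -
  have "score (slot m p b) id y = (\<Sum>q<n. u q * rho m v0 (blk m y q) +
     (if q = p then u p * (rho m v0 (b *\<^sub>v blk m y p) - rho m v0 (blk m y p)) else 0))"
    unfolding score_def slot_def by (intro sum.cong refl) (auto simp: algebra_simps)
  also have "\<dots> = (\<Sum>q<n. u q * rho m v0 (blk m y q)) + u p * (rho m v0 (b *\<^sub>v blk m y p) - rho m v0 (blk m y p))"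
    using p by (simp add: sum.distrib)
  finally show ?thesis .
qed

lemma score_cyc:
  assumes "j \<le> l"
  shows "score (\<lambda>_. 1\<^sub>m m) (cyc j l) y = (\<Sum>q<n. u q * rho m v0 (blk m y (cycinv j l q)))"
  unfolding score_def pinv_cyc[OF assms] by simp

lemma score_one: "score (\<lambda>_. 1\<^sub>m m) id y = (\<Sum>q<n. u q * rho m v0 (blk m y q))"
  unfolding score_def by simp

lemma dist_le_iff:
  assumes "good hs s" "good hs' s'" "y \<in> carrier_vec (m*n)"
  shows "vnorm (wr m n hs s *\<^sub>v y - x0) \<le> vnorm (wr m n hs' s' *\<^sub>v y - x0) \<longleftrightarrow> score hs' s' y \<le> score hs s y"
  unfolding vnorm_le_iff dist[OF assms(1,3)] dist[OF assms(2,3)] by simp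

definition Inv :: "nat \<Rightarrow> nat \<Rightarrow> complex vec \<Rightarrow> bool" where
  "Inv P Q y \<longleftrightarrow> y \<in> carrier_vec (m*n) \<and>
     (\<forall>q<P. \<forall>b\<in>H. rho m v0 (b *\<^sub>v blk m y q) \<le> rho m v0 (blk m y q)) \<and>
     (\<forall>q. q + 1 < Q \<longrightarrow> rho m v0 (blk m y q) \<le> rho m v0 (blk m y (q+1)))"

lemma blk_slot: "p < n \<Longrightarrow> c \<in> H \<Longrightarrow> y \<in> carrier_vec (m*n) \<Longrightarrow> q < n \<Longrightarrow>
   blk m (wr m n (slot m p c) id *\<^sub>v y) q = (if q = p then c *\<^sub>v blk m y p else blk m y q)"
  using blk_wr[OF good_slot] by (simp add: slot_def)

lemma diag_step:
  assumes p: "p < n" and inv: "Inv p p y" and c: "c \<in> H"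
    and opt: "\<forall>b\<in>H. vnorm (wr m n (slot m p c) id *\<^sub>v y - x0) \<le> vnorm (wr m n (slot m p b) id *\<^sub>v y - x0)"
  shows "Inv (p+1) p (wr m n (slot m p c) id *\<^sub>v y)"
proof -
  have y: "y \<in> carrier_vec (m*n)" using inv unfolding Inv_def by auto
  have best: "rho m v0 (b *\<^sub>v blk m y p) \<le> rho m v0 (c *\<^sub>v blk m y p)" if b: "b \<in> H" for b
  proof -
    have "score (slot m p b) id y \<le> score (slot m p c) id y"
      using opt b dist_le_iff[OF good_slot[OF p c] good_slot[OF p b] y] by auto
    hence "u p * rho m v0 (b *\<^sub>v blk m y p) \<le> u p * rho m v0 (c *\<^sub>v blk m y p)"
      unfolding score_slot[OF p b y] score_slot[OF p c y] by (simp add: algebra_simps)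
    thus ?thesis using u_pos'[OF p] by simp
  qed
  let ?y = "wr m n (slot m p c) id *\<^sub>v y"
  have yc: "?y \<in> carrier_vec (m*n)" using mult_mat_vec_carrier[OF wr_carrier y] .
  have i: "\<forall>q<p+1. \<forall>b\<in>H. rho m v0 (b *\<^sub>v blk m ?y q) \<le> rho m v0 (blk m ?y q)"
  proof (intro allI impI ballI)
    fix q b assume q: "q < p + 1" and b: "b \<in> H"
    show "rho m v0 (b *\<^sub>v blk m ?y q) \<le> rho m v0 (blk m ?y q)"
    proof (cases "q = p")
      case True
      have "b *\<^sub>v (c *\<^sub>v blk m y p) = (b * c) *\<^sub>v blk m y p"
        using H_carrier[OF b] H_carrier[OF c] by simp
      thus ?thesis using True blk_slot[OF p c y p] best[OF H_mult[OF b c]] by simp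
    next
      case False
      hence "q < p" using q by simp
      thus ?thesis using inv b blk_slot[OF p c y] p False unfolding Inv_def by simp
    qed
  qed
  have ii: "\<forall>q. q + 1 < p \<longrightarrow> rho m v0 (blk m ?y q) \<le> rho m v0 (blk m ?y (q+1))"
    using inv blk_slot[OF p c y] p unfolding Inv_def by auto
  show ?thesis unfolding Inv_def using yc i ii by blast
qed

lemma blk_cyc: "j \<le> l \<Longrightarrow> l < n \<Longrightarrow> y \<in> carrier_vec (m*n) \<Longrightarrow> q < n \<Longrightarrow>
   blk m (wr m n (\<lambda>_. 1\<^sub>m m) (cyc j l) *\<^sub>v y) q = blk m y (cycinv j l q)"
  using blk_wr[OF good_cyc] by (simp add: pinv_cyc)

lemma cyc_step:
  assumes l: "l < n" and inv: "Inv (l+1) l y" and jl: "j \<le> l"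
    and opt: "\<forall>j'\<le>l. vnorm (wr m n (\<lambda>_. 1\<^sub>m m) (cyc j l) *\<^sub>v y - x0) \<le> vnorm (wr m n (\<lambda>_. 1\<^sub>m m) (cyc j' l) *\<^sub>v y - x0)"
  shows "Inv (l+1) (l+1) (wr m n (\<lambda>_. 1\<^sub>m m) (cyc j l) *\<^sub>v y)"
proof -
  have y: "y \<in> carrier_vec (m*n)" using inv unfolding Inv_def by auto
  define \<rho> where "\<rho> q = rho m v0 (blk m y q)" for q
  have sc: "score (\<lambda>_. 1\<^sub>m m) (cyc j' l) y = (\<Sum>q<n. u q * \<rho> (cycinv j' l q))" if "j' \<le> l" for j'
    unfolding score_cyc[OF that] \<rho>_def ..
  have sle: "score (\<lambda>_. 1\<^sub>m m) (cyc j' l) y \<le> score (\<lambda>_. 1\<^sub>m m) (cyc j l) y" if j': "j' \<le> l" for j'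
    using opt j' dist_le_iff[OF good_cyc[OF jl l] good_cyc[OF j' l] y] by auto
  have A: "\<rho> l \<le> \<rho> j" if "j < l"
  proof -
    have "(\<Sum>q<n. u q * \<rho> (cycinv (j+1) l q)) \<le> (\<Sum>q<n. u q * \<rho> (cycinv j l q))"
      using sle[of "j+1"] that sc[of "j+1"] sc[OF jl] by simp
    hence "(u (j+1) - u j) * (\<rho> l - \<rho> j) \<le> 0" unfolding cycinv_sum[OF that l] by simp
    moreover have "u j < u (j+1)" using u_strict[of j "j+1"] that l by simp
    ultimately show ?thesis by (simp add: mult_le_0_iff)
  qed
  have B: "\<rho> (j-1) \<le> \<rho> l" if "0 < j"
  proof -
    have jj: "j - 1 < l" "j - 1 + 1 = j" using that jl by auto
    have "(\<Sum>q<n. u q * \<rho> (cycinv (j-1) l q)) \<le> (\<Sum>q<n. u q * \<rho> (cycinv j l q))"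
      using sle[of "j-1"] jj sc[of "j-1"] sc[OF jl] by simp
    hence "0 \<le> (u j - u (j-1)) * (\<rho> l - \<rho> (j-1))" using cycinv_sum[OF jj(1) l, of u \<rho>] jj(2) by simp
    moreover have "u (j-1) < u j" using u_strict[of "j-1" j] that jl l by simp
    ultimately show ?thesis by (simp add: zero_le_mult_iff)
  qed
  let ?y = "wr m n (\<lambda>_. 1\<^sub>m m) (cyc j l) *\<^sub>v y"
  have yc: "?y \<in> carrier_vec (m*n)" using mult_mat_vec_carrier[OF wr_carrier y] .
  have by': "\<And>q. q < n \<Longrightarrow> blk m ?y q = blk m y (cycinv j l q)" using blk_cyc[OF jl l y] .
  have i: "\<forall>q<l+1. \<forall>b\<in>H. rho m v0 (b *\<^sub>v blk m ?y q) \<le> rho m v0 (blk m ?y q)"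
  proof (intro allI impI ballI)
    fix q b assume q: "q < l + 1" and b: "b \<in> H"
    have "cycinv j l q < l + 1" using cycinv_le[OF jl, of q] q by simp
    thus "rho m v0 (b *\<^sub>v blk m ?y q) \<le> rho m v0 (blk m ?y q)"
      using inv b by' q l unfolding Inv_def by simp
  qed
  have old: "\<rho> q \<le> \<rho> (q+1)" if "q + 1 < l" for q using inv that unfolding Inv_def \<rho>_def by auto
  have ii: "\<forall>q. q + 1 < l + 1 \<longrightarrow> rho m v0 (blk m ?y q) \<le> rho m v0 (blk m ?y (q+1))"
  proof (intro allI impI)
    fix q assume q: "q + 1 < l + 1"
    have "\<rho> (cycinv j l q) \<le> \<rho> (cycinv j l (q+1))"
    proof -
      consider "q + 1 < j" | "q + 1 = j" | "q = j" | "j < q" by linarith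
      thus ?thesis
      proof cases
        case 1 thus ?thesis using old[of q] jl by (simp add: cycinv_def)
      next
        case 2 thus ?thesis using B jl q by (auto simp: cycinv_def)
      next
        case 3 thus ?thesis using A q by (auto simp: cycinv_def)
      next
        case 4 thus ?thesis using old[of "q-1"] q by (auto simp: cycinv_def)
      qed
    qed
    thus "rho m v0 (blk m ?y q) \<le> rho m v0 (blk m ?y (q+1))" using by' q l \<rho>_def by simp
  qed
  show ?thesis unfolding Inv_def using yc i ii by blast
qed

lemma opt_final:
  assumes inv: "Inv n n y" and g: "good hs s"
  shows "score hs s y \<le> score (\<lambda>_. 1\<^sub>m m) id y"
proof -
  have s: "s permutes {..<n}" using g unfolding good_def by auto
  define \<rho> where "\<rho> q = rho m v0 (blk m y q)" for q
  have "score hs s y \<le> (\<Sum>q<n. u q * \<rho> (pinv s q))"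
    unfolding score_def
  proof (rule sum_mono)
    fix q assume q: "q \<in> {..<n}"
    have "rho m v0 (hs q *\<^sub>v blk m y (pinv s q)) \<le> \<rho> (pinv s q)"
      using inv pinv_less[OF g] q g unfolding Inv_def good_def \<rho>_def by auto
    thus "u q * rho m v0 (hs q *\<^sub>v blk m y (pinv s q)) \<le> u q * \<rho> (pinv s q)"
      using u_pos'[of q] q by (intro mult_left_mono) auto
  qed
  also have "\<dots> = (\<Sum>q<n. u (s q) * \<rho> q)"
    using sum_perm[OF s, of "\<lambda>q. u q * \<rho> (pinv s q)"] permutes_inverses(2)[OF s] by simp
  also have "\<dots> \<le> (\<Sum>q<n. u q * \<rho> q)"
  proof (rule rearr[OF _ _ s])
    show "\<And>i j. i \<le> j \<Longrightarrow> j < n \<Longrightarrow> u i \<le> u j" by (rule u_mono)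
    show "\<And>i j. i \<le> j \<Longrightarrow> j < n \<Longrightarrow> \<rho> i \<le> \<rho> j"
    proof -
      fix i j :: nat assume ij: "i \<le> j" "j < n"
      thus "\<rho> i \<le> \<rho> j"
      proof (induction j)
        case 0 thus ?case by simp
      next
        case (Suc j)
        show ?case
        proof (cases "i = Suc j")
          case True thus ?thesis by simp
        next
          case False
          hence "\<rho> i \<le> \<rho> j" using Suc by simp
          moreover have "\<rho> j \<le> \<rho> (Suc j)" using inv Suc.prems unfolding Inv_def \<rho>_def by auto
          ultimately show ?thesis by simp
        qed
      qed
    qed
  qed
  also have "\<dots> = score (\<lambda>_. 1\<^sub>m m) id y" unfolding score_one \<rho>_def ..
  finally show ?thesis .
qed

end

context wsetup begin


lemma lprod_GG: "(\<forall>k\<in>{1..K}. d k \<in> GG m n H) \<Longrightarrow> lprod (m*n) d K \<in> GG m n H"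
proof (induction K)
  case 0 thus ?case by (simp add: GG_one)
next
  case (Suc K)
  hence "lprod (m*n) d K \<in> GG m n H" by auto
  moreover have "d (Suc K) \<in> GG m n H" using Suc.prems by auto
  ultimately show ?case by (simp add: GG_mult)
qed

lemma lprod_carrier: "(\<forall>k\<in>{1..K}. d k \<in> GG m n H) \<Longrightarrow> lprod (m*n) d K \<in> carrier_mat (m*n) (m*n)"
  using GG_carrier lprod_GG by blast

lemma run_GG: "decoding_run m n H x0 r d \<Longrightarrow> \<forall>k\<in>{1..2*n-1}. d k \<in> GG m n H"
proof
  fix k assume run: "decoding_run m n H x0 r d" and k: "k \<in> {1..2*n-1}"
  hence "d k \<in> CL m n H k" unfolding decoding_run_def by blast
  thus "d k \<in> GG m n H" using CL_sub_GG k by auto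
qed

lemma run_inv:
  assumes run: "decoding_run m n H x0 r d" and r: "r \<in> carrier_vec (m*n)"
  shows "1 \<le> k \<Longrightarrow> k \<le> 2*n-1 \<Longrightarrow> Inv (k div 2 + 1) ((k+1) div 2) (lprod (m*n) d k *\<^sub>v r)"
proof (induction k)
  case 0 thus ?case by simp
next
  case (Suc k)
  have dG: "\<forall>k\<in>{1..2*n-1}. d k \<in> GG m n H" using run_GG[OF run] .
  have lc: "lprod (m*n) d k \<in> carrier_mat (m*n) (m*n)" using lprod_carrier[of k d] dG Suc.prems by auto
  have dc: "d (Suc k) \<in> carrier_mat (m*n) (m*n)" using dG Suc.prems GG_carrier by auto
  define y where "y = lprod (m*n) d k *\<^sub>v r"
  have y: "y \<in> carrier_vec (m*n)" unfolding y_def using lc r by simp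
  have step: "lprod (m*n) d (Suc k) *\<^sub>v r = d (Suc k) *\<^sub>v y" unfolding y_def using lc dc r by simp
  have dk: "d (Suc k) \<in> CL m n H (Suc k)" and
    opt: "\<forall>a\<in>CL m n H (Suc k). vnorm (d (Suc k) *\<^sub>v y - x0) \<le> vnorm (a *\<^sub>v y - x0)"
  proof -
    have "Suc k \<in> {1..2*n-1}" using Suc.prems by simp
    hence "d (Suc k) \<in> CL m n H (Suc k) \<and> (\<forall>a\<in>CL m n H (Suc k). vnorm (d (Suc k) *\<^sub>v (lprod (m*n) d (Suc k - 1) *\<^sub>v r) - x0)
                            \<le> vnorm (a *\<^sub>v (lprod (m*n) d (Suc k - 1) *\<^sub>v r) - x0))"
      using run unfolding decoding_run_def by blast
    thus "d (Suc k) \<in> CL m n H (Suc k)" "\<forall>a\<in>CL m n H (Suc k). vnorm (d (Suc k) *\<^sub>v y - x0) \<le> vnorm (a *\<^sub>v y - x0)"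
      unfolding y_def by auto
  qed
  show ?case
  proof (cases "Suc k = 1 \<or> even (Suc k)")
    case True
    define l where "l = Suc k div 2"
    have ln: "l < n" using Suc.prems unfolding l_def by auto
    have IHl: "Inv l l y"
    proof (cases "k = 0")
      case True thus ?thesis unfolding Inv_def l_def using y by simp
    next
      case False
      hence "Inv (k div 2 + 1) ((k+1) div 2) y" using Suc.IH Suc.prems unfolding y_def by simp
      moreover have "k div 2 + 1 = l" "(k+1) div 2 = l" using True False unfolding l_def by auto
      ultimately show ?thesis by simp
    qed
    obtain c where c: "c \<in> H" and dkc: "d (Suc k) = wr m n (slot m l c) id"
      using dk unfolding CL_diag[OF True] l_def by blast
    have "\<forall>b\<in>H. vnorm (wr m n (slot m l c) id *\<^sub>v y - x0) \<le> vnorm (wr m n (slot m l b) id *\<^sub>v y - x0)"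
      using opt unfolding dkc CL_diag[OF True] l_def by blast
    hence "Inv (l+1) l (d (Suc k) *\<^sub>v y)" using diag_step[OF ln IHl c] dkc by simp
    moreover have "Suc k div 2 + 1 = l + 1" "(Suc k + 1) div 2 = l \<or> (Suc k + 1) div 2 = 1 \<and> l = 0"
      using True unfolding l_def by auto
    ultimately show ?thesis unfolding step Inv_def by auto
  next
    case False
    hence odd: "odd (Suc k)" "Suc k \<noteq> 1" by auto
    define l where "l = Suc k div 2"
    have ln: "l < n" using Suc.prems unfolding l_def by auto
    have k1: "1 \<le> k" using odd by (cases k) auto
    have IHl: "Inv (l+1) l y"
    proof -
      have "Inv (k div 2 + 1) ((k+1) div 2) y" using Suc.IH Suc.prems k1 unfolding y_def by simp
      moreover have "k div 2 + 1 = l + 1" "(k+1) div 2 = l" using odd unfolding l_def by auto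
      ultimately show ?thesis by simp
    qed
    obtain j where j: "j \<le> l" and dkc: "d (Suc k) = wr m n (\<lambda>_. 1\<^sub>m m) (cyc j l)"
      using dk unfolding CL_cyc[OF odd] l_def by blast
    have "\<forall>j'\<le>l. vnorm (wr m n (\<lambda>_. 1\<^sub>m m) (cyc j l) *\<^sub>v y - x0) \<le> vnorm (wr m n (\<lambda>_. 1\<^sub>m m) (cyc j' l) *\<^sub>v y - x0)"
      using opt unfolding dkc CL_cyc[OF odd] l_def by blast
    hence "Inv (l+1) (l+1) (d (Suc k) *\<^sub>v y)" using cyc_step[OF ln IHl j] dkc by simp
    moreover have "Suc k div 2 + 1 = l + 1" "(Suc k + 1) div 2 = l + 1" using odd unfolding l_def by auto
    ultimately show ?thesis unfolding step by simp
  qed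
qed

lemma decode_eq:
  assumes run: "decoding_run m n H x0 r d" and r: "r \<in> DR (m*n) (GG m n H) x0 h" and h: "h \<in> GG m n H"
  shows "lprod (m*n) d (2*n-1) = h"
proof (rule ccontr)
  assume ne: "lprod (m*n) d (2*n-1) \<noteq> h"
  define D where "D = lprod (m*n) d (2*n-1)"
  have rc: "r \<in> carrier_vec (m*n)" using r unfolding DR_def by auto
  have DG: "D \<in> GG m n H" unfolding D_def using lprod_GG run_GG[OF run] by blast
  define y where "y = D *\<^sub>v r"
  have yc: "y \<in> carrier_vec (m*n)" unfolding y_def using GG_carrier[OF DG] rc by simp
  have inv: "Inv n n y"
  proof -
    have "Inv ((2*n-1) div 2 + 1) ((2*n-1+1) div 2) y"
      using run_inv[OF run rc, of "2*n-1"] n_pos unfolding y_def D_def by simp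
    moreover have "(2*n-1) div 2 + 1 = n" "(2*n-1+1) div 2 = n" using n_pos by auto
    ultimately show ?thesis by simp
  qed
  have optall: "vnorm (y - x0) \<le> vnorm (a *\<^sub>v y - x0)" if a: "a \<in> GG m n H" for a
  proof -
    obtain hs s where g: "good hs s" and a: "a = wr m n hs s" using a unfolding GG_eq by auto
    have "score hs s y \<le> score (\<lambda>_. 1\<^sub>m m) id y" by (rule opt_final[OF inv g])
    hence "vnorm (wr m n (\<lambda>_. 1\<^sub>m m) id *\<^sub>v y - x0) \<le> vnorm (wr m n hs s *\<^sub>v y - x0)"
      using dist_le_iff[OF good_one g yc] by simp
    thus ?thesis unfolding a wr_one using yc by simp
  qed
  have "D \<notin> {s * h | s. s \<in> Stab (GG m n H) x0}"
  proof
    assume "D \<in> {s * h | s. s \<in> Stab (GG m n H) x0}"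
    then obtain s where "s \<in> Stab (GG m n H) x0" "D = s * h" by blast
    hence "s = 1\<^sub>m (m*n)" "D = s * h" using stab_trivial unfolding Stab_def by auto
    hence "D = h" using GG_carrier[OF h] by simp
    thus False using ne unfolding D_def by simp
  qed
  hence lt: "vnorm (h *\<^sub>v r - x0) < vnorm (y - x0)" using r DG unfolding DR_def y_def by blast
  obtain Di where Di: "Di \<in> GG m n H" "Di * D = 1\<^sub>m (m*n)" using GG_inv[OF DG] by blast
  have "(h * Di) *\<^sub>v y = h *\<^sub>v r"
  proof -
    have "(h * Di) *\<^sub>v y = h *\<^sub>v (Di *\<^sub>v (D *\<^sub>v r))"
      unfolding y_def using GG_carrier[OF h] GG_carrier[OF Di(1)] GG_carrier[OF DG] rc by simp
    also have "Di *\<^sub>v (D *\<^sub>v r) = (Di * D) *\<^sub>v r"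
      using GG_carrier[OF Di(1)] GG_carrier[OF DG] rc by simp
    finally show ?thesis using Di(2) rc by simp
  qed
  moreover have "vnorm (y - x0) \<le> vnorm ((h * Di) *\<^sub>v y - x0)" using optall GG_mult[OF h Di(1)] by blast
  ultimately show False using lt by simp
qed

end
lemma adj_cyc_comm1: "i + 1 < j \<Longrightarrow> j \<le> l \<Longrightarrow> adjswap i (cyc j l x) = cyc j l (adjswap i x)"
proof -
  assume a: "i + 1 < j" "j \<le> l"
  consider "x < i" | "x = i" | "x = i + 1" | "i + 1 < x \<and> x < j" | "j \<le> x \<and> x < l" | "x = l" | "l < x" by linarith
  thus ?thesis by cases (use a in \<open>auto simp: adjswap_def cyc_def\<close>)
qed
lemma adj_cyc_abs1: "i + 1 \<le> l \<Longrightarrow> adjswap i (cyc i l x) = cyc (i+1) l x"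
proof -
  assume a: "i + 1 \<le> l"
  consider "x < i" | "x = i" | "i < x \<and> x < l" | "x = l" | "l < x" by linarith
  thus ?thesis by cases (use a in \<open>auto simp: adjswap_def cyc_def\<close>)
qed
lemma adj_cyc_abs2: "i + 1 \<le> l \<Longrightarrow> adjswap i (cyc (i+1) l x) = cyc i l x"
proof -
  assume a: "i + 1 \<le> l"
  consider "x < i" | "x = i" | "x = i + 1 \<and> i + 1 < l" | "x = i + 1 \<and> i + 1 = l" | "i + 1 < x \<and> x < l" | "x = l \<and> i + 1 < l" | "l < x" by linarith
  thus ?thesis by cases (use a in \<open>auto simp: adjswap_def cyc_def\<close>)
qed

lemma adj_cyc_comm2: "j < i \<Longrightarrow> i + 1 \<le> l \<Longrightarrow> adjswap i (cyc j l x) = cyc j l (adjswap (i - 1) x)"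
proof -
  assume a: "j < i" "i + 1 \<le> l"
  consider "x < j" | "j \<le> x \<and> x + 1 < i" | "x + 1 = i" | "x = i" | "i < x \<and> x < l" | "x = l" | "l < x" by linarith
  thus ?thesis by cases (use a in \<open>auto simp: adjswap_def cyc_def\<close>)
qed

lemma cyc_at: "j \<le> l \<Longrightarrow> cyc j l l = j" unfolding cyc_def by auto

context wsetup begin

definition Push :: "nat \<Rightarrow> complex mat set" where
  "Push K = {wr m n (slot m p b) id | p b. b \<in> H \<and> b \<noteq> 1\<^sub>m m \<and> p \<le> K div 2}
          \<union> {wr m n (\<lambda>_. 1\<^sub>m m) (adjswap i) | i. i + 1 \<le> (K - 1) div 2}"

lemma wr_slot_mult:
  assumes "p < n" "l < n" "b \<in> H" "c \<in> H"
  shows "wr m n (slot m p b) id * wr m n (slot m l c) id = wr m n (\<lambda>i. slot m p b i * slot m l c i) id"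
  using wr_mult_good[OF good_slot[OF assms(1,3)] good_slot[OF assms(2,4)]] by simp

lemma slot_comm:
  assumes "p \<noteq> l" "b \<in> H" "c \<in> H"
  shows "(\<lambda>i. slot m p b i * slot m l c i) = (\<lambda>i. slot m l c i * slot m p b i)"
proof
  fix i show "slot m p b i * slot m l c i = slot m l c i * slot m p b i"
    using assms H_carrier[OF assms(2)] H_carrier[OF assms(3)] unfolding slot_def by auto
qed

lemma slot_same:
  assumes "b \<in> H" "c \<in> H"
  shows "(\<lambda>i. slot m l b i * slot m l c i) = slot m l (b * c)"
proof
  fix i show "slot m l b i * slot m l c i = slot m l (b * c) i"
    using assms unfolding slot_def by auto
qed

lemma H_cancel: "b \<in> H \<Longrightarrow> c \<in> H \<Longrightarrow> b * c = c \<Longrightarrow> b = 1\<^sub>m m"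
proof -
  assume b: "b \<in> H" and c: "c \<in> H" and e: "b * c = c"
  obtain c1 where c1: "c1 \<in> H" "c * c1 = 1\<^sub>m m" using H_inv[OF c] by blast
  have "b = b * (c * c1)" using c1 H_carrier[OF b] by simp
  also have "\<dots> = (b * c) * c1" using H_carrier[OF b] H_carrier[OF c] H_carrier[OF c1(1)] by simp
  also have "\<dots> = 1\<^sub>m m" using e c1 by simp
  finally show ?thesis .
qed

lemma absorb_slot:
  assumes l: "l < n" and b: "b \<in> H" "b \<noteq> 1\<^sub>m m" and c: "c \<in> H"
  shows "wr m n (slot m l b) id * wr m n (slot m l c) id = wr m n (slot m l (b * c)) id"
    and "wr m n (slot m l (b * c)) id \<noteq> wr m n (slot m l c) id"
proof -
  show "wr m n (slot m l b) id * wr m n (slot m l c) id = wr m n (slot m l (b * c)) id"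
    unfolding wr_slot_mult[OF l l b(1) c] slot_same[OF b(1) c] ..
  show "wr m n (slot m l (b * c)) id \<noteq> wr m n (slot m l c) id"
  proof
    assume "wr m n (slot m l (b * c)) id = wr m n (slot m l c) id"
    hence "slot m l (b * c) = slot m l c" using wr_inj[OF good_slot[OF l H_mult[OF b(1) c]] good_slot[OF l c]] by simp
    hence "b * c = c" unfolding slot_def by (metis (full_types))
    thus False using H_cancel[OF b(1) c] b(2) by simp
  qed
qed

lemma Push_GG: "K \<le> 2*n-1 \<Longrightarrow> a \<in> Push K \<Longrightarrow> a \<in> GG m n H"
proof -
  assume K: "K \<le> 2*n-1" and a: "a \<in> Push K"
  have Kn: "K div 2 < n" using K n_pos by auto
  show ?thesis
  proof (cases "a \<in> {wr m n (slot m p b) id | p b. b \<in> H \<and> b \<noteq> 1\<^sub>m m \<and> p \<le> K div 2}")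
    case True
    then obtain p b where "a = wr m n (slot m p b) id" "b \<in> H" "p \<le> K div 2" by blast
    thus ?thesis using good_slot[of p b] Kn in_GG by simp
  next
    case False
    then obtain i where "a = wr m n (\<lambda>_. 1\<^sub>m m) (adjswap i)" "i + 1 \<le> (K - 1) div 2" using a unfolding Push_def by blast
    moreover have "i + 1 < n" using calculation(2) K by auto
    ultimately show ?thesis using good_adjswap in_GG by simp
  qed
qed

lemma absorb_or_pass:
  assumes K: "Suc K \<le> 2*n-1" and a: "a \<in> Push (Suc K)" and e0: "e0 \<in> CL m n H (Suc K)"
  shows "(\<exists>e\<in>CL m n H (Suc K). e \<noteq> e0 \<and> a * e0 = e) \<or> (1 \<le> K \<and> (\<exists>a'\<in>Push K. a * e0 = e0 * a'))"
proof -
  define l where "l = Suc K div 2"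
  have ln: "l < n" using K unfolding l_def by auto
  show ?thesis
  proof (cases "Suc K = 1 \<or> even (Suc K)")
    case diag: True
    obtain c where c: "c \<in> H" and e0c: "e0 = wr m n (slot m l c) id"
      using e0 unfolding CL_diag[OF diag] l_def by blast
    show ?thesis
    proof (cases "a \<in> {wr m n (slot m p b) id | p b. b \<in> H \<and> b \<noteq> 1\<^sub>m m \<and> p \<le> Suc K div 2}")
      case True
      then obtain p b where a: "a = wr m n (slot m p b) id" and b: "b \<in> H" "b \<noteq> 1\<^sub>m m" and p: "p \<le> l"
        unfolding l_def by blast
      have pn: "p < n" using p ln by simp
      show ?thesis
      proof (cases "p = l")
        case True
        have "wr m n (slot m l (b * c)) id \<in> CL m n H (Suc K)"
          unfolding CL_diag[OF diag] l_def[symmetric] using H_mult[OF b(1) c] by blast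
        thus ?thesis using absorb_slot[OF ln b c] a e0c True by blast
      next
        case False
        hence pl: "p < l" using p by simp
        have K1: "1 \<le> K" using pl unfolding l_def by (cases K) auto
        have "a \<in> Push K"
        proof -
          have "p \<le> K div 2" using pl diag unfolding l_def by auto
          thus ?thesis unfolding Push_def a using b by blast
        qed
        moreover have "a * e0 = e0 * a"
          unfolding a e0c wr_slot_mult[OF pn ln b(1) c] wr_slot_mult[OF ln pn c b(1)] slot_comm[OF False b(1) c] ..
        ultimately show ?thesis using K1 by blast
      qed
    next
      case False
      then obtain i where a: "a = wr m n (\<lambda>_. 1\<^sub>m m) (adjswap i)" and i: "i + 1 \<le> (Suc K - 1) div 2"
        using a unfolding Push_def by blast
      have il: "i + 1 < l" using i diag unfolding l_def by auto
      have K1: "1 \<le> K" using il unfolding l_def by (cases K) auto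
      have "a \<in> Push K"
      proof -
        have "i + 1 \<le> (K - 1) div 2" using il diag unfolding l_def by auto
        thus ?thesis unfolding Push_def a by blast
      qed
      moreover have "a * e0 = e0 * a"
      proof -
        have ia: "i + 1 < n" using il ln by simp
        have "a * e0 = wr m n (\<lambda>j. 1\<^sub>m m * slot m l c (pinv (adjswap i) j)) (adjswap i \<circ> id)"
          unfolding a e0c by (rule wr_mult_good[OF good_adjswap[OF ia] good_slot[OF ln c]])
        also have "\<dots> = wr m n (\<lambda>j. slot m l c j * 1\<^sub>m m) (id \<circ> adjswap i)"
        proof -
          have "(\<lambda>j. 1\<^sub>m m * slot m l c (pinv (adjswap i) j)) = (\<lambda>j. slot m l c j * 1\<^sub>m m)"
          proof
            fix j
            have "(adjswap i j = l) = (j = l)" using il unfolding adjswap_def by auto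
            thus "1\<^sub>m m * slot m l c (pinv (adjswap i) j) = slot m l c j * 1\<^sub>m m"
              unfolding pinv_adjswap slot_def using H_carrier[OF c] by auto
          qed
          thus ?thesis by simp
        qed
        also have "\<dots> = e0 * a"
          unfolding a e0c using wr_mult_good[OF good_slot[OF ln c] good_adjswap[OF ia]] by simp
        finally show ?thesis .
      qed
      ultimately show ?thesis using K1 by blast
    qed
  next
    case cycc: False
    hence odd: "odd (Suc K)" "Suc K \<noteq> 1" by auto
    have K1: "1 \<le> K" using odd by (cases K) auto
    have Kl: "K div 2 = l" "(K - 1) div 2 + 1 = l" using odd K1 unfolding l_def by auto
    obtain j where j: "j \<le> l" and e0c: "e0 = wr m n (\<lambda>_. 1\<^sub>m m) (cyc j l)"
      using e0 unfolding CL_cyc[OF odd] l_def by blast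
    have gc: "good (\<lambda>_. 1\<^sub>m m) (cyc j l)" using good_cyc[OF j ln] .
    show ?thesis
    proof (cases "a \<in> {wr m n (slot m p b) id | p b. b \<in> H \<and> b \<noteq> 1\<^sub>m m \<and> p \<le> Suc K div 2}")
      case True
      then obtain p b where a: "a = wr m n (slot m p b) id" and b: "b \<in> H" "b \<noteq> 1\<^sub>m m" and p: "p \<le> l"
        unfolding l_def by blast
      have pn: "p < n" using p ln by simp
      define p' where "p' = cycinv j l p"
      have p'l: "p' \<le> l" unfolding p'_def using cycinv_le[OF j p] .
      have p'n: "p' < n" using p'l ln by simp
      have "wr m n (slot m p' b) id \<in> Push K" unfolding Push_def using b p'l Kl by blast
      moreover have "a * e0 = e0 * wr m n (slot m p' b) id"
      proof -
        have "a * e0 = wr m n (\<lambda>i. slot m p b i * 1\<^sub>m m) (id \<circ> cyc j l)"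
          unfolding a e0c using wr_mult_good[OF good_slot[OF pn b(1)] gc] by simp
        also have "\<dots> = wr m n (\<lambda>i. 1\<^sub>m m * slot m p' b (pinv (cyc j l) i)) (cyc j l \<circ> id)"
        proof -
          have "(\<lambda>i. slot m p b i * 1\<^sub>m m) = (\<lambda>i. 1\<^sub>m m * slot m p' b (pinv (cyc j l) i))"
          proof
            fix i
            have "(cycinv j l i = p') = (i = p)" unfolding p'_def using cyc_cycinv[OF j] by metis
            thus "slot m p b i * 1\<^sub>m m = 1\<^sub>m m * slot m p' b (pinv (cyc j l) i)"
              unfolding pinv_cyc[OF j] slot_def using H_carrier[OF b(1)] by auto
          qed
          thus ?thesis by simp
        qed
        also have "\<dots> = e0 * wr m n (slot m p' b) id"
          unfolding e0c using wr_mult_good[OF gc good_slot[OF p'n b(1)]] by simp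
        finally show ?thesis .
      qed
      ultimately show ?thesis using K1 by blast
    next
      case False
      then obtain i where a: "a = wr m n (\<lambda>_. 1\<^sub>m m) (adjswap i)" and i: "i + 1 \<le> (Suc K - 1) div 2"
        using a unfolding Push_def by blast
      have il: "i + 1 \<le> l" using i unfolding l_def by auto
      have ia: "i + 1 < n" using il ln by simp
      have prod: "a * e0 = wr m n (\<lambda>_. 1\<^sub>m m) (adjswap i \<circ> cyc j l)"
        unfolding a e0c by (rule wr_ones_mult[OF adjswap_permutes[OF ia] cyc_permutes[OF j ln]])
      consider "j = i \<or> j = i + 1" | "i + 1 < j" | "j < i" by linarith
      thus ?thesis
      proof cases
        case 1
        define j' where "j' = adjswap i j"
        have j'l: "j' \<le> l" unfolding j'_def adjswap_def using 1 il by auto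
        have jj: "j' \<noteq> j" unfolding j'_def adjswap_def using 1 by auto
        have "adjswap i \<circ> cyc j l = cyc j' l"
        proof
          fix x show "(adjswap i \<circ> cyc j l) x = cyc j' l x"
          proof (cases "j = i")
            case True
            hence "j' = i + 1" unfolding j'_def adjswap_def by simp
            thus ?thesis using True adj_cyc_abs1[OF il] by simp
          next
            case False
            hence "j = i + 1" "j' = i" using 1 unfolding j'_def adjswap_def by auto
            thus ?thesis using adj_cyc_abs2[OF il] by simp
          qed
        qed
        hence ae: "a * e0 = wr m n (\<lambda>_. 1\<^sub>m m) (cyc j' l)" using prod by simp
        have inCL: "wr m n (\<lambda>_. 1\<^sub>m m) (cyc j' l) \<in> CL m n H (Suc K)"
          unfolding CL_cyc[OF odd] l_def[symmetric] using j'l by blast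
        have "wr m n (\<lambda>_. 1\<^sub>m m) (cyc j' l) \<noteq> e0"
        proof
          assume "wr m n (\<lambda>_. 1\<^sub>m m) (cyc j' l) = e0"
          hence "cyc j' l = cyc j l" using wr_inj[OF good_cyc[OF j'l ln] gc] e0c by simp
          hence "cyc j' l l = cyc j l l" by simp
          thus False using cyc_at[OF j'l] cyc_at[OF j] jj by simp
        qed
        thus ?thesis using inCL ae by blast
      next
        case 2
        have "a \<in> Push K" unfolding Push_def a using 2 j Kl by auto
        moreover have "a * e0 = e0 * a"
        proof -
          have "adjswap i \<circ> cyc j l = cyc j l \<circ> adjswap i" using adj_cyc_comm1[OF 2 j] by auto
          thus ?thesis unfolding prod unfolding a e0c
            using wr_ones_mult[OF cyc_permutes[OF j ln] adjswap_permutes[OF ia]] by simp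
        qed
        ultimately show ?thesis using K1 by blast
      next
        case 3
        have i1: "i - 1 + 1 < n" using 3 ia by simp
        have "wr m n (\<lambda>_. 1\<^sub>m m) (adjswap (i - 1)) \<in> Push K" unfolding Push_def using 3 il Kl by auto
        moreover have "a * e0 = e0 * wr m n (\<lambda>_. 1\<^sub>m m) (adjswap (i - 1))"
        proof -
          have "adjswap i \<circ> cyc j l = cyc j l \<circ> adjswap (i - 1)" using adj_cyc_comm2[OF 3 il] by auto
          thus ?thesis unfolding prod unfolding e0c
            using wr_ones_mult[OF cyc_permutes[OF j ln] adjswap_permutes[OF i1]] by simp
        qed
        ultimately show ?thesis using K1 by blast
      qed
    qed
  qed
qed

end




lemma lprod_cong: "(\<And>k. 1 \<le> k \<Longrightarrow> k \<le> K \<Longrightarrow> c k = c' k) \<Longrightarrow> lprod N c K = lprod N c' K"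
  by (induction K) auto

context wsetup begin

lemma lprod_rep:
  "K \<le> 2*n-1 \<Longrightarrow> (\<forall>k\<in>{1..K}. c k \<in> CL m n H k) \<Longrightarrow>
   \<exists>hs s. good hs s \<and> s permutes {..<(K+1) div 2} \<and> (\<forall>i. K div 2 + 1 \<le> i \<longrightarrow> hs i = 1\<^sub>m m)
     \<and> lprod (m*n) c K = wr m n hs s"
proof (induction K)
  case 0
  have "good (\<lambda>_. 1\<^sub>m m) id" "id permutes {..<(0+1) div 2}" using good_one by auto
  thus ?case using wr_one by fastforce
next
  case (Suc K)
  obtain hs s where g: "good hs s" and sp: "s permutes {..<(K+1) div 2}"
    and h1: "\<forall>i. K div 2 + 1 \<le> i \<longrightarrow> hs i = 1\<^sub>m m" and x: "lprod (m*n) c K = wr m n hs s"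
    using Suc by auto
  define l where "l = Suc K div 2"
  have ln: "l < n" using Suc.prems unfolding l_def by auto
  have e0: "c (Suc K) \<in> CL m n H (Suc K)" using Suc.prems by auto
  show ?case
  proof (cases "Suc K = 1 \<or> even (Suc K)")
    case diag: True
    obtain b where b: "b \<in> H" and e: "c (Suc K) = wr m n (slot m l b) id"
      using e0 unfolding CL_diag[OF diag] l_def by blast
    have gs: "good (slot m l b) id" using good_slot[OF ln b] .
    have "lprod (m*n) c (Suc K) = wr m n (\<lambda>i. slot m l b i * hs (pinv id i)) (id \<circ> s)"
      using wr_mult_good[OF gs g] x e by simp
    moreover have "good (\<lambda>i. slot m l b i * hs (pinv id i)) (id \<circ> s)" using good_mult[OF gs g] .
    moreover have "id \<circ> s permutes {..<(Suc K + 1) div 2}"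
      using permutes_subset[OF sp] by auto
    moreover have "\<forall>i. Suc K div 2 + 1 \<le> i \<longrightarrow> slot m l b i * hs (pinv id i) = 1\<^sub>m m"
      using h1 unfolding l_def slot_def by auto
    ultimately show ?thesis by blast
  next
    case cycc: False
    hence odd: "odd (Suc K)" "Suc K \<noteq> 1" by auto
    have Kl: "K div 2 + 1 = l + 1" "(K + 1) div 2 = l" "(Suc K + 1) div 2 = l + 1" "Suc K div 2 = l"
      using odd unfolding l_def by auto
    obtain j where j: "j \<le> l" and e: "c (Suc K) = wr m n (\<lambda>_. 1\<^sub>m m) (cyc j l)"
      using e0 unfolding CL_cyc[OF odd] l_def by blast
    have gc: "good (\<lambda>_. 1\<^sub>m m) (cyc j l)" using good_cyc[OF j ln] .
    have "lprod (m*n) c (Suc K) = wr m n (\<lambda>i. 1\<^sub>m m * hs (pinv (cyc j l) i)) (cyc j l \<circ> s)"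
      using wr_mult_good[OF gc g] x e by simp
    moreover have "good (\<lambda>i. 1\<^sub>m m * hs (pinv (cyc j l) i)) (cyc j l \<circ> s)" using good_mult[OF gc g] .
    moreover have "cyc j l \<circ> s permutes {..<(Suc K + 1) div 2}"
    proof -
      have "s permutes {..<l+1}" using permutes_subset[OF sp] Kl by auto
      moreover have "cyc j l permutes {..<l+1}" using cyc_permutes[OF j] by simp
      ultimately show ?thesis using permutes_compose Kl by metis
    qed
    moreover have "\<forall>i. Suc K div 2 + 1 \<le> i \<longrightarrow> 1\<^sub>m m * hs (pinv (cyc j l) i) = 1\<^sub>m m"
      using h1 Kl j unfolding pinv_cyc[OF j] cycinv_def by auto
    ultimately show ?thesis by blast
  qed
qed

lemma canon_unique:
  "K \<le> 2*n-1 \<Longrightarrow> (\<forall>k\<in>{1..K}. c k \<in> CL m n H k) \<Longrightarrow> (\<forall>k\<in>{1..K}. c' k \<in> CL m n H k) \<Longrightarrow>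
   lprod (m*n) c K = lprod (m*n) c' K \<Longrightarrow> \<forall>k\<in>{1..K}. c k = c' k"
proof (induction K)
  case 0 thus ?case by simp
next
  case (Suc K)
  obtain hs s where g: "good hs s" and sp: "s permutes {..<(K+1) div 2}"
    and h1: "\<forall>i. K div 2 + 1 \<le> i \<longrightarrow> hs i = 1\<^sub>m m" and x: "lprod (m*n) c K = wr m n hs s"
    using lprod_rep[of K c] Suc.prems by auto
  obtain hs' s' where g': "good hs' s'" and sp': "s' permutes {..<(K+1) div 2}"
    and h1': "\<forall>i. K div 2 + 1 \<le> i \<longrightarrow> hs' i = 1\<^sub>m m" and x': "lprod (m*n) c' K = wr m n hs' s'"
    using lprod_rep[of K c'] Suc.prems by auto
  define l where "l = Suc K div 2"
  have ln: "l < n" using Suc.prems unfolding l_def by auto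
  have e0: "c (Suc K) \<in> CL m n H (Suc K)" "c' (Suc K) \<in> CL m n H (Suc K)" using Suc.prems by auto
  have eq: "c (Suc K) * wr m n hs s = c' (Suc K) * wr m n hs' s'" using Suc.prems(4) x x' by simp
  have same: "c (Suc K) = c' (Suc K)"
  proof (cases "K = 0")
    case True
    hence "wr m n hs s = 1\<^sub>m (m*n)" "wr m n hs' s' = 1\<^sub>m (m*n)" using x x' by auto
    moreover have "c (Suc K) \<in> GG m n H" "c' (Suc K) \<in> GG m n H"
      using CL_sub_GG[of "Suc K"] e0 Suc.prems by auto
    hence "c (Suc K) \<in> carrier_mat (m*n) (m*n)" "c' (Suc K) \<in> carrier_mat (m*n) (m*n)"
      using GG_carrier by auto
    ultimately show ?thesis using eq by simp
  next
    case K0: False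
    show ?thesis
    proof (cases "Suc K = 1 \<or> even (Suc K)")
      case diag: True
      obtain b where b: "b \<in> H" and e: "c (Suc K) = wr m n (slot m l b) id"
        using e0(1) unfolding CL_diag[OF diag] l_def by blast
      obtain b' where b': "b' \<in> H" and e': "c' (Suc K) = wr m n (slot m l b') id"
        using e0(2) unfolding CL_diag[OF diag] l_def by blast
      have "wr m n (\<lambda>i. slot m l b i * hs (pinv id i)) (id \<circ> s) = wr m n (\<lambda>i. slot m l b' i * hs' (pinv id i)) (id \<circ> s')"
        using eq unfolding e e' wr_mult_good[OF good_slot[OF ln b] g] wr_mult_good[OF good_slot[OF ln b'] g'] .
      hence "(\<lambda>i. slot m l b i * hs (pinv id i)) = (\<lambda>i. slot m l b' i * hs' (pinv id i))"
        using wr_inj[OF good_mult[OF good_slot[OF ln b] g] good_mult[OF good_slot[OF ln b'] g']] by blast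
      hence "slot m l b l * hs l = slot m l b' l * hs' l" by (metis id_apply inv_id)
      moreover have "K div 2 + 1 \<le> l" using diag K0 unfolding l_def by auto
      ultimately have "b * 1\<^sub>m m = b' * 1\<^sub>m m" using h1 h1' unfolding slot_def by simp
      hence "b = b'" using H_carrier[OF b] H_carrier[OF b'] by simp
      thus ?thesis using e e' by simp
    next
      case cycc: False
      hence odd: "odd (Suc K)" "Suc K \<noteq> 1" by auto
      have Kl: "(K + 1) div 2 = l" using odd unfolding l_def by auto
      obtain j where j: "j \<le> l" and e: "c (Suc K) = wr m n (\<lambda>_. 1\<^sub>m m) (cyc j l)"
        using e0(1) unfolding CL_cyc[OF odd] l_def by blast
      obtain j' where j': "j' \<le> l" and e': "c' (Suc K) = wr m n (\<lambda>_. 1\<^sub>m m) (cyc j' l)"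
        using e0(2) unfolding CL_cyc[OF odd] l_def by blast
      have "wr m n (\<lambda>i. 1\<^sub>m m * hs (pinv (cyc j l) i)) (cyc j l \<circ> s) = wr m n (\<lambda>i. 1\<^sub>m m * hs' (pinv (cyc j' l) i)) (cyc j' l \<circ> s')"
        using eq unfolding e e' wr_mult_good[OF good_cyc[OF j ln] g] wr_mult_good[OF good_cyc[OF j' ln] g'] .
      hence "cyc j l \<circ> s = cyc j' l \<circ> s'"
        using wr_inj[OF good_mult[OF good_cyc[OF j ln] g] good_mult[OF good_cyc[OF j' ln] g']] by blast
      hence "cyc j l (s l) = cyc j' l (s' l)" by (metis comp_apply)
      moreover have "s l = l" "s' l = l" using permutes_not_in[OF sp, of l] permutes_not_in[OF sp', of l] Kl by auto
      ultimately have "j = j'" using cyc_at[OF j] cyc_at[OF j'] by simp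
      thus ?thesis using e e' by simp
    qed
  qed
  have "lprod (m*n) c K = lprod (m*n) c' K"
  proof -
    have eG: "c (Suc K) \<in> GG m n H" using CL_sub_GG[of "Suc K"] e0 Suc.prems by auto
    obtain z where z: "z \<in> GG m n H" "z * c (Suc K) = 1\<^sub>m (m*n)" using GG_inv[OF eG] by blast
    note zc = GG_carrier[OF z(1)] and ec = GG_carrier[OF eG]
    have xc: "lprod (m*n) c K \<in> carrier_mat (m*n) (m*n)" "lprod (m*n) c' K \<in> carrier_mat (m*n) (m*n)"
      using x x' by auto
    have "lprod (m*n) c K = (z * c (Suc K)) * lprod (m*n) c K" using z xc by simp
    also have "\<dots> = z * (c (Suc K) * lprod (m*n) c K)" using zc ec xc by simp
    also have "c (Suc K) * lprod (m*n) c K = c (Suc K) * lprod (m*n) c' K" using Suc.prems(4) same by simp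
    also have "z * (c (Suc K) * lprod (m*n) c' K) = (z * c (Suc K)) * lprod (m*n) c' K"
      using zc ec xc by simp
    also have "\<dots> = lprod (m*n) c' K" using z xc by simp
    finally show ?thesis .
  qed
  hence "\<forall>k\<in>{1..K}. c k = c' k" using Suc by auto
  thus ?case using same by (auto simp: le_Suc_eq)
qed

end


context wsetup begin

lemma push:
  "1 \<le> K \<Longrightarrow> K \<le> 2*n-1 \<Longrightarrow> (\<forall>k\<in>{1..K}. c k \<in> CL m n H k) \<Longrightarrow> a \<in> Push K \<Longrightarrow>
   \<exists>c'. (\<forall>k\<in>{1..K}. c' k \<in> CL m n H k) \<and> a * lprod (m*n) c K = lprod (m*n) c' K
        \<and> (\<exists>!k. k \<in> {1..K} \<and> c' k \<noteq> c k)"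
proof (induction K arbitrary: a)
  case 0 thus ?case by simp
next
  case (Suc K)
  define e0 where "e0 = c (Suc K)"
  have e0: "e0 \<in> CL m n H (Suc K)" using Suc.prems unfolding e0_def by auto
  have e0G: "e0 \<in> GG m n H" using CL_sub_GG[of "Suc K"] e0 Suc.prems by auto
  have aG: "a \<in> GG m n H" using Push_GG[OF Suc.prems(2,4)] .
  have Kle: "K \<le> 2*n-1" using Suc.prems by simp
  have cK: "\<forall>k\<in>{1..K}. c k \<in> CL m n H k" using Suc.prems(3) by simp
  have cG: "\<forall>k\<in>{1..K}. c k \<in> GG m n H"
  proof
    fix k assume k: "k \<in> {1..K}"
    hence "c k \<in> CL m n H k" using cK by blast
    thus "c k \<in> GG m n H" using CL_sub_GG[of k] k Kle by auto
  qed
  have lG: "lprod (m*n) c K \<in> GG m n H" using lprod_GG[OF cG] .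
  note ac = GG_carrier[OF aG] and ec = GG_carrier[OF e0G] and lc = GG_carrier[OF lG]
  have lS: "lprod (m*n) c (Suc K) = e0 * lprod (m*n) c K" unfolding e0_def by simp
  from absorb_or_pass[OF Suc.prems(2,4) e0]
  show ?case
  proof
    assume "\<exists>e\<in>CL m n H (Suc K). e \<noteq> e0 \<and> a * e0 = e"
    then obtain e where e: "e \<in> CL m n H (Suc K)" "e \<noteq> e0" "a * e0 = e" by blast
    define c' where "c' = c(Suc K := e)"
    have "\<forall>k\<in>{1..Suc K}. c' k \<in> CL m n H k" using Suc.prems e unfolding c'_def by auto
    moreover have "a * lprod (m*n) c (Suc K) = lprod (m*n) c' (Suc K)"
    proof -
      have "lprod (m*n) c' K = lprod (m*n) c K" by (rule lprod_cong) (auto simp: c'_def)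
      hence "lprod (m*n) c' (Suc K) = e * lprod (m*n) c K" unfolding c'_def by simp
      also have "\<dots> = a * lprod (m*n) c (Suc K)" unfolding lS e(3)[symmetric] using ac ec lc by simp
      finally show ?thesis by simp
    qed
    moreover have "\<exists>!k. k \<in> {1..Suc K} \<and> c' k \<noteq> c k"
    proof (rule ex1I[of _ "Suc K"])
      show "Suc K \<in> {1..Suc K} \<and> c' (Suc K) \<noteq> c (Suc K)" using e(2) unfolding c'_def e0_def by simp
    next
      fix k assume "k \<in> {1..Suc K} \<and> c' k \<noteq> c k"
      thus "k = Suc K" unfolding c'_def by (cases "k = Suc K") auto
    qed
    ultimately show ?thesis by blast
  next
    assume "1 \<le> K \<and> (\<exists>a'\<in>Push K. a * e0 = e0 * a')"
    then obtain a' where K1: "1 \<le> K" and a': "a' \<in> Push K" "a * e0 = e0 * a'" by blast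
    obtain c'' where c'': "\<forall>k\<in>{1..K}. c'' k \<in> CL m n H k" "a' * lprod (m*n) c K = lprod (m*n) c'' K"
      "\<exists>!k. k \<in> {1..K} \<and> c'' k \<noteq> c k"
      using Suc.IH[OF K1 Kle cK a'(1)] by blast
    have a'G: "a' \<in> GG m n H" using Push_GG[OF Kle a'(1)] .
    note a'c = GG_carrier[OF a'G]
    define c' where "c' = c''(Suc K := e0)"
    have "\<forall>k\<in>{1..Suc K}. c' k \<in> CL m n H k" using c''(1) e0 unfolding c'_def by (auto simp: le_Suc_eq)
    moreover have "a * lprod (m*n) c (Suc K) = lprod (m*n) c' (Suc K)"
    proof -
      have "lprod (m*n) c' K = lprod (m*n) c'' K" by (rule lprod_cong) (auto simp: c'_def)
      hence "lprod (m*n) c' (Suc K) = e0 * (a' * lprod (m*n) c K)" unfolding c'_def c''(2) by simp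
      also have "\<dots> = (e0 * a') * lprod (m*n) c K" using ec a'c lc by simp
      also have "\<dots> = (a * e0) * lprod (m*n) c K" using a'(2) by simp
      also have "\<dots> = a * lprod (m*n) c (Suc K)" unfolding lS using ac ec lc by simp
      finally show ?thesis by simp
    qed
    moreover have "\<exists>!k. k \<in> {1..Suc K} \<and> c' k \<noteq> c k"
    proof -
      obtain k0 where k0: "k0 \<in> {1..K}" "c'' k0 \<noteq> c k0" and u: "\<And>k. k \<in> {1..K} \<and> c'' k \<noteq> c k \<Longrightarrow> k = k0"
        using c''(3) by blast
      show ?thesis
      proof (rule ex1I[of _ k0])
        show "k0 \<in> {1..Suc K} \<and> c' k0 \<noteq> c k0" using k0 unfolding c'_def by auto
      next
        fix k assume k: "k \<in> {1..Suc K} \<and> c' k \<noteq> c k"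
        have "k \<noteq> Suc K" using k unfolding c'_def e0_def by auto
        hence "k \<in> {1..K} \<and> c'' k \<noteq> c k" using k unfolding c'_def by auto
        thus "k = k0" using u by blast
      qed
    qed
    ultimately show ?thesis by blast
  qed
qed

lemma Xk_top: "Xk m n H XH (2*n-1) = Xodd m n XH n"
proof -
  have "odd (2*n-1)" "(2*n-1+1) div 2 = n" using n_pos by auto
  thus ?thesis unfolding Xk_def by simp
qed

lemma NG_Push:
  assumes XH: "XH \<subseteq> H" and eG: "e \<in> GG m n H" and e1: "e \<noteq> 1\<^sub>m (m*n)"
    and eX: "e \<in> Xk m n H XH (2*n-1) \<union> inv_set (m*n) (GG m n H) (Xk m n H XH (2*n-1))"
  shows "e \<in> Push (2*n-1)"
proof -
  have P1: "wr m n (slot m 0 b) id \<in> Push (2*n-1)" if "b \<in> H" "b \<noteq> 1\<^sub>m m" for b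
    unfolding Push_def using that by blast
  have P2: "wr m n (\<lambda>_. 1\<^sub>m m) (adjswap i) \<in> Push (2*n-1)" if "i + 1 < n" for i
  proof -
    have "i + 1 \<le> (2*n-1-1) div 2" using that by auto
    thus ?thesis unfolding Push_def by blast
  qed
  have slot1: "slot m 0 (1\<^sub>m m) = (\<lambda>_. 1\<^sub>m m)" unfolding slot_def by auto
  have slot0: "(\<lambda>i. if i = 0 then h else 1\<^sub>m m) = slot m 0 h" for h unfolding slot_def ..
  have n0: "0 < n" using n_pos .
  show ?thesis
  proof (cases "e \<in> Xk m n H XH (2*n-1)")
    case True
    then consider h where "h \<in> XH" "e = wr m n (slot m 0 h) id" | i where "i + 1 < n" "e = wr m n (\<lambda>_. 1\<^sub>m m) (adjswap i)"
      unfolding Xk_top Xodd_def slot0 by blast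
    thus ?thesis
    proof cases
      case 1
      have "h \<noteq> 1\<^sub>m m" using e1 1 slot1 wr_one by auto
      thus ?thesis using P1 1 XH by auto
    next
      case 2 thus ?thesis using P2 by simp
    qed
  next
    case False
    hence "e \<in> inv_set (m*n) (GG m n H) (Xk m n H XH (2*n-1))" using eX by blast
    then obtain x where x: "x \<in> Xodd m n XH n" and ex: "e * x = 1\<^sub>m (m*n)"
      unfolding inv_set_def Xk_top by blast
    obtain hs s where g: "good hs s" and e: "e = wr m n hs s" using eG unfolding GG_eq by blast
    have s: "s permutes {..<n}" using g unfolding good_def by auto
    from x consider h where "h \<in> XH" "x = wr m n (slot m 0 h) id" | i where "i + 1 < n" "x = wr m n (\<lambda>_. 1\<^sub>m m) (adjswap i)"
      unfolding Xodd_def slot0 by blast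
    thus ?thesis
    proof cases
      case 1
      have h: "h \<in> H" using 1 XH by auto
      have gs: "good (slot m 0 h) id" using good_slot[OF n0 h] .
      have "wr m n (\<lambda>i. hs i * slot m 0 h (pinv s i)) (s \<circ> id) = wr m n (\<lambda>_. 1\<^sub>m m) id"
        using ex unfolding e 1 wr_mult_good[OF g gs] wr_one .
      hence eqs: "(\<lambda>i. hs i * slot m 0 h (pinv s i)) = (\<lambda>_. 1\<^sub>m m)" "s \<circ> id = id"
        using wr_inj[OF good_mult[OF g gs] good_one] by auto
      hence sid: "s = id" by simp
      have hsi: "hs i = 1\<^sub>m m" if "i \<noteq> 0" for i
      proof -
        have "hs i * slot m 0 h (pinv s i) = 1\<^sub>m m" using eqs(1) by metis
        thus ?thesis using that good_carrier[OF g, of i] unfolding sid slot_def by simp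
      qed
      have "hs = slot m 0 (hs 0)" unfolding slot_def using hsi by auto
      hence e': "e = wr m n (slot m 0 (hs 0)) id" using e sid by simp
      have "hs 0 \<in> H" using g n0 unfolding good_def by auto
      moreover have "hs 0 \<noteq> 1\<^sub>m m" using e' e1 slot1 wr_one by auto
      ultimately show ?thesis using P1 e' by simp
    next
      case 2
      have ga: "good (\<lambda>_. 1\<^sub>m m) (adjswap i)" using good_adjswap[OF 2(1)] .
      have "wr m n (\<lambda>j. hs j * 1\<^sub>m m) (s \<circ> adjswap i) = wr m n (\<lambda>_. 1\<^sub>m m) id"
        using ex unfolding e 2 wr_mult_good[OF g ga] wr_one .
      hence eqs: "(\<lambda>j. hs j * 1\<^sub>m m) = (\<lambda>_. 1\<^sub>m m)" "s \<circ> adjswap i = id"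
        using wr_inj[OF _ good_one] good_mult[OF g ga] by auto
      have hs1: "hs = (\<lambda>_. 1\<^sub>m m)"
      proof
        fix j have "hs j * 1\<^sub>m m = 1\<^sub>m m" using eqs(1) by metis
        thus "hs j = 1\<^sub>m m" using good_carrier[OF g, of j] by simp
      qed
      have "s = adjswap i"
      proof
        fix x have "s (adjswap i (adjswap i x)) = adjswap i x" using eqs(2) by (metis comp_apply id_apply)
        thus "s x = adjswap i x" using adjswap_invol by simp
      qed
      thus ?thesis using P2[OF 2(1)] e hs1 by simp
    qed
  qed
qed

lemma GG_finite: "finite (GG m n H)"
proof -
  define F where "F = {hs. (\<forall>i<n. hs i \<in> H) \<and> (\<forall>i. n \<le> i \<longrightarrow> hs i = 1\<^sub>m m)}"
  have "F \<subseteq> (\<lambda>f i. if i < n then f i else 1\<^sub>m m) ` (PiE {..<n} (\<lambda>_. H))"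
  proof
    fix hs assume hs: "hs \<in> F"
    have "hs = (\<lambda>i. if i < n then restrict hs {..<n} i else 1\<^sub>m m)"
      using hs unfolding F_def by (auto simp: fun_eq_iff)
    moreover have "restrict hs {..<n} \<in> PiE {..<n} (\<lambda>_. H)" using hs unfolding F_def by auto
    ultimately show "hs \<in> (\<lambda>f i. if i < n then f i else 1\<^sub>m m) ` (PiE {..<n} (\<lambda>_. H))" by blast
  qed
  moreover have "finite ((\<lambda>f i. if i < n then f i else 1\<^sub>m m) ` (PiE {..<n} (\<lambda>_. H)))"
    using finite_PiE[of "{..<n}" "\<lambda>_. H"] H_finite by simp
  ultimately have fF: "finite F" by (rule finite_subset)
  have fP: "finite {s. s permutes {..<n}}" by (rule finite_permutations) simp
  have "GG m n H \<subseteq> (\<lambda>(hs, s). wr m n hs s) ` (F \<times> {s. s permutes {..<n}})"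
  proof
    fix x assume "x \<in> GG m n H"
    then obtain hs s where g: "good hs s" and x: "x = wr m n hs s" unfolding GG_eq by blast
    have "(hs, s) \<in> F \<times> {s. s permutes {..<n}}" using g unfolding good_def F_def by auto
    thus "x \<in> (\<lambda>(hs, s). wr m n hs s) ` (F \<times> {s. s permutes {..<n}})" using x by force
  qed
  moreover have "finite ((\<lambda>(hs, s). wr m n hs s) ` (F \<times> {s. s permutes {..<n}}))"
    using fF fP by simp
  ultimately show ?thesis by (rule finite_subset)
qed

lemma vnorm_zero_eq:
  assumes x: "x \<in> carrier_vec N" and y: "y \<in> carrier_vec N" and z: "vnorm (x - y) = 0"
  shows "x = y"
proof (rule eq_vecI)
  have "(\<Sum>i<N. (cmod ((x - y) $ i))^2) = 0" using vnorm_sq[of "x - y"] z x y by simp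
  hence "\<forall>i\<in>{..<N}. (cmod ((x - y) $ i))^2 = 0" by (subst sum_nonneg_eq_0_iff[symmetric]) auto
  thus "\<And>i. i < dim_vec y \<Longrightarrow> x $ i = y $ i" using x y by auto
qed (use x y in auto)

lemma dmin_pos:
  assumes "GG m n H - Stab (GG m n H) x0 \<noteq> {}"
  shows "0 < dmin (GG m n H) x0"
proof -
  define S where "S = {vnorm (a *\<^sub>v x0 - x0) | a. a \<in> GG m n H - Stab (GG m n H) x0}"
  have fS: "finite S" unfolding S_def using GG_finite by auto
  have nS: "S \<noteq> {}" unfolding S_def using assms by auto
  have pS: "\<forall>x\<in>S. 0 < x"
  proof
    fix x assume "x \<in> S"
    then obtain a where a: "a \<in> GG m n H" "a \<notin> Stab (GG m n H) x0" "x = vnorm (a *\<^sub>v x0 - x0)"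
      unfolding S_def by auto
    have ac: "a *\<^sub>v x0 \<in> carrier_vec (m*n)" using mult_mat_vec_carrier[OF GG_carrier[OF a(1)] x0_carrier] .
    have "a *\<^sub>v x0 \<noteq> x0" using a unfolding Stab_def by auto
    hence "vnorm (a *\<^sub>v x0 - x0) \<noteq> 0" using vnorm_zero_eq[OF ac x0_carrier] by blast
    thus "0 < x" using vnorm_nonneg[of "a *\<^sub>v x0 - x0"] a(3) by simp
  qed
  have "Min S \<in> S" using Min_in[OF fS nS] .
  thus ?thesis using pS unfolding dmin_def S_def by auto
qed

end

theorem mainTheorem15:
  fixes m n :: nat and H XH :: "complex mat set" and v0 :: "complex vec" and u :: "nat \<Rightarrow> real"
    and g gi h hi :: "complex mat" and r :: "complex vec" and d c :: "nat \<Rightarrow> complex mat"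
  assumes H: "finite_unitary_group m H"
    and XH: "generates m XH H"
    and v0: "v0 \<in> carrier_vec m" "vnorm v0 = 1"
    and v0_min: "\<forall>h \<in> H - {1\<^sub>m m}. vnorm (1\<^sub>m m *\<^sub>v v0 - v0) < vnorm (h *\<^sub>v v0 - v0)"
    and u_pos: "0 < u 0"
    and u_inc: "\<forall>i. i + 1 < n \<longrightarrow> u i < u (i + 1)"
    and x0_norm: "vnorm (init_vec m n u v0) = 1"
    and NNP: "NN_property (m*n) (GG m n H) (init_vec m n u v0) (Xk m n H XH (2*n-1))"
    and g: "g \<in> GG m n H"
    and c: "\<forall>k \<in> {1..2*n-1}. c k \<in> CL m n H k" "g = lprod (m*n) c (2*n-1)"
    and gi: "gi \<in> GG m n H" "gi * g = 1\<^sub>m (m*n)"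
    and h: "h \<in> GG m n H"
    and hi: "hi \<in> GG m n H" "hi * h = 1\<^sub>m (m*n)"
    and h_nn: "nearest_neighbor (GG m n H) (init_vec m n u v0)
                  (gi *\<^sub>v init_vec m n u v0) (hi *\<^sub>v init_vec m n u v0)"
    and r: "r \<in> DR (m*n) (GG m n H) (init_vec m n u v0) h"
    and run: "decoding_run m n H (init_vec m n u v0) r d"
  shows "\<exists>!k. k \<in> {1..2*n-1} \<and> d k \<noteq> c k"
proof -
  have n0: "0 < n"
  proof (rule ccontr)
    assume "\<not> 0 < n"
    hence "vnorm (init_vec m n u v0) = 0" unfolding vnorm_def init_vec_def by simp
    thus False using x0_norm by simp
  qed
  interpret W: wsetup m n H v0 u
    using H v0 v0_min u_pos u_inc n0 by unfold_locales auto
  let ?x0 = "init_vec m n u v0"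
  have dL: "\<forall>k\<in>{1..2*n-1}. d k \<in> CL m n H k" using run unfolding decoding_run_def by blast
  have hD: "lprod (m*n) d (2*n-1) = h" by (rule W.decode_eq[OF run r h])
  define e where "e = g * hi"
  have eG: "e \<in> GG m n H" unfolding e_def by (rule W.GG_mult[OF g hi(1)])
  note gc = W.GG_carrier[OF g] and gic = W.GG_carrier[OF gi(1)] and hc = W.GG_carrier[OF h]
    and hic = W.GG_carrier[OF hi(1)]
  have ggi: "g * gi = 1\<^sub>m (m*n)" using mat_mult_left_right_inverse[OF gic gc gi(2)] .
  have eh: "e * h = g"
  proof -
    have "e * h = g * (hi * h)" unfolding e_def using gc hic hc by simp
    thus ?thesis using hi(2) gc by simp
  qed
  have x0c: "?x0 \<in> carrier_vec (m*n)" by (rule W.x0_carrier)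
  have nn: "GG m n H - Stab (GG m n H) ?x0 \<noteq> {}"
    "vnorm (gi *\<^sub>v ?x0 - hi *\<^sub>v ?x0) = dmin (GG m n H) ?x0"
    using h_nn unfolding nearest_neighbor_def by auto
  have dist_e: "vnorm (?x0 - e *\<^sub>v ?x0) = dmin (GG m n H) ?x0"
  proof -
    have "?x0 = g *\<^sub>v (gi *\<^sub>v ?x0)"
    proof -
      have "g *\<^sub>v (gi *\<^sub>v ?x0) = (g * gi) *\<^sub>v ?x0" using gc gic x0c by simp
      thus ?thesis using ggi x0c by simp
    qed
    moreover have "e *\<^sub>v ?x0 = g *\<^sub>v (hi *\<^sub>v ?x0)" unfolding e_def using gc hic x0c by simp
    ultimately have "?x0 - e *\<^sub>v ?x0 = g *\<^sub>v (gi *\<^sub>v ?x0 - hi *\<^sub>v ?x0)"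
      using mult_minus_distrib_mat_vec[OF gc, of "gi *\<^sub>v ?x0" "hi *\<^sub>v ?x0"] gic hic x0c by simp
    moreover have "gi *\<^sub>v ?x0 - hi *\<^sub>v ?x0 \<in> carrier_vec (m*n)" using gic hic x0c by simp
    ultimately show ?thesis using W.GG_norm[OF g] nn(2) by simp
  qed
  have eNG: "e \<in> NG (GG m n H) ?x0"
  proof -
    have "?x0 \<in> (\<lambda>a. a *\<^sub>v ?x0) ` GG m n H"
      using W.GG_one x0c by (intro image_eqI[of _ _ "1\<^sub>m (m*n)"]) auto
    moreover have "e *\<^sub>v ?x0 \<in> (\<lambda>a. a *\<^sub>v ?x0) ` GG m n H" using eG by blast
    ultimately show ?thesis unfolding NG_def nearest_neighbor_def using eG nn(1) dist_e by blast
  qed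
  have e1: "e \<noteq> 1\<^sub>m (m*n)"
  proof
    assume "e = 1\<^sub>m (m*n)"
    hence "dmin (GG m n H) ?x0 = 0" using dist_e x0c by (simp add: vnorm_def)
    thus False using W.dmin_pos[OF nn(1)] by simp
  qed
  have XHH: "XH \<subseteq> H" using XH unfolding generates_def by auto
  have eP: "e \<in> W.Push (2*n-1)"
    using W.NG_Push[OF XHH eG e1] eNG NNP unfolding NN_property_def by blast
  obtain d' where d': "\<forall>k\<in>{1..2*n-1}. d' k \<in> CL m n H k"
    "e * lprod (m*n) d (2*n-1) = lprod (m*n) d' (2*n-1)" "\<exists>!k. k \<in> {1..2*n-1} \<and> d' k \<noteq> d k"
  proof -
    have "1 \<le> 2*n-1" using n0 by simp
    from W.push[OF this order.refl dL eP] show ?thesis using that by blast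
  qed
  have "lprod (m*n) d' (2*n-1) = lprod (m*n) c (2*n-1)" using d'(2) hD eh c(2) by simp
  hence dc: "\<forall>k\<in>{1..2*n-1}. d' k = c k" using W.canon_unique[OF _ d'(1) c(1)] by simp
  show ?thesis
  proof -
    obtain k0 where k0: "k0 \<in> {1..2*n-1}" "d' k0 \<noteq> d k0"
      and uq: "\<And>k. k \<in> {1..2*n-1} \<and> d' k \<noteq> d k \<Longrightarrow> k = k0" using d'(3) by blast
    show ?thesis
    proof (rule ex1I[of _ k0])
      show "k0 \<in> {1..2*n-1} \<and> d k0 \<noteq> c k0" using k0 dc by auto
    next
      fix k assume "k \<in> {1..2*n-1} \<and> d k \<noteq> c k"
      thus "k = k0" using uq dc by auto
    qed
  qed
qed


end
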